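(* Let $\mu_0$ and $\mu_n$ ($n\in\mathbb N$) be discrete ensembles of states in $\mathfrak S(\mathcal H)$, $\mu_n=\{p^n_i,\rho^n_i\}$. The following are equivalent: (a) $D_*(\mu_n,\mu_0)\to0$; (b) $D_K(\mu_n,\mu_0)\to0$; (c) $\lim_{n\to\infty}\sum_ip^n_if(\rho^n_i)=\sum_ip^0_if(\rho^0_i)$ for every bounded continuous function $f$ on $\mathfrak S(\mathcal H)$ (with the trace-norm topology). In other words, both $D_*$ and $D_K$ generate the weak convergence topology on the set of discrete ensembles regarded as probability measures $\sum_ip_i\delta_{\rho_i}$.
   Context: $\mathcal H$ is a separable Hilbert space, $\mathfrak S(\mathcal H)$ the set of density operators, $\|\cdot\|_1$ the trace norm. A discrete ensemble $\{p_i,\rho_i\}$ is a finite or countable family of states $\rho_i$ with a probability distribution $\{p_i\}$; it corresponds to the probability measure $\sum_ip_i\delta_{\rho_i}$ on $\mathfrak S(\mathcal H)$ ($\delta_\rho$ the Dirac measure). $D_0(\{p_i,\rho_i\},\{q_i,\sigma_i\})=\frac12\sum_i\|p_i\rho_i-q_i\sigma_i\|_1$ for ensembles indexed by the same index set (a shorter ensemble is padded with zero-probability entries). For an ensemble $\mu$, $\mathcal E(\mu)$ is the set of all finite or countable ensembles $\{p'_j,\rho'_j\}$ with $\sum_jp'_j\delta_{\rho'_j}=\sum_ip_i\delta_{\rho_i}$, and $D_*(\mu,\nu)=\inf_{\mu'\in\mathcal E(\mu),\nu'\in\mathcal E(\nu)}D_0(\mu',\nu')$. Kantorovich distance: $D_K(\{p_i,\rho_i\},\{q_j,\sigma_j\})=\frac12\inf_{\{P_{ij}\}}\sum_{i,j}P_{ij}\|\rho_i-\sigma_j\|_1$,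 infimum over joint probability distributions with $\sum_jP_{ij}=p_i$, $\sum_iP_{ij}=q_j$. *)

theory Defs
  imports "HOL-Analysis.Analysis"
begin

text \<open>The separable Hilbert space is modelled as l2 over a countable index type 'i
  (finite types give finite dimension, infinite countable types give l2(N)).
  Operators are represented by their matrices w.r.t. the standard basis.\<close>

type_synonym 'i mat = "'i \<Rightarrow> 'i \<Rightarrow> complex"

text \<open>Density operators: positive semidefinite (on all finite sections) matrices with
  trace one. Such a matrix defines a positive trace-class operator of trace 1.\<close>
definition density :: "('i::countable) mat \<Rightarrow> bool" where
  "density \<rho> \<longleftrightarrow>
     (\<forall>F (x::'i \<Rightarrow> complex). finite F \<longrightarrow>
        (\<Sum>i\<in>F. \<Sum>j\<in>F. cnj (x i) * \<rho> i j * x j) \<in> \<real> \<and>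
        Re (\<Sum>i\<in>F. \<Sum>j\<in>F. cnj (x i) * \<rho> i j * x j) \<ge> 0)
     \<and> ((\<lambda>i. \<rho> i i) has_sum 1) UNIV"

definition mat_scale :: "real \<Rightarrow> 'i mat \<Rightarrow> 'i mat" where
  "mat_scale c A = (\<lambda>i j. complex_of_real c * A i j)"

definition mat_diff :: "'i mat \<Rightarrow> 'i mat \<Rightarrow> 'i mat" where
  "mat_diff A B = (\<lambda>i j. A i j - B i j)"

definition contraction_on :: "'i set \<Rightarrow> 'i mat \<Rightarrow> bool" where
  "contraction_on F B \<longleftrightarrow>
     (\<forall>x::'i \<Rightarrow> complex. (\<Sum>i\<in>F. (cmod (\<Sum>j\<in>F. B i j * x j))\<^sup>2) \<le> (\<Sum>j\<in>F. (cmod (x j))\<^sup>2))"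

text \<open>Trace norm of a trace-class operator, via the duality with bounded operators:
  ||T||_1 = sup |Tr(B T)| over finitely supported contractions B.\<close>
definition trace_norm :: "'i mat \<Rightarrow> real" where
  "trace_norm T = Sup {cmod (\<Sum>i\<in>F. \<Sum>j\<in>F. B i j * T j i) | F B. finite F \<and> contraction_on F B}"

text \<open>A discrete (finite or countable) ensemble, indexed by nat; finite ensembles are
  padded with zero-probability entries.\<close>
definition ensemble :: "(nat \<Rightarrow> real) \<Rightarrow> (nat \<Rightarrow> ('i::countable) mat) \<Rightarrow> bool" where
  "ensemble p \<rho> \<longleftrightarrow> (\<forall>i. p i \<ge> 0) \<and> (p has_sum 1) UNIV \<and> (\<forall>i. density (\<rho> i))"

definition same_measure :: "(nat \<Rightarrow> real) \<Rightarrow> (nat \<Rightarrow> 'i mat) \<Rightarrow> (nat \<Rightarrow> real) \<Rightarrow> (nat \<Rightarrow> 'i mat) \<Rightarrow> bool" where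
  "same_measure p \<rho> q \<sigma> \<longleftrightarrow>
     (\<forall>A. infsum p {i. \<rho> i \<in> A} = infsum q {j. \<sigma> j \<in> A})"

definition D0 :: "(nat \<Rightarrow> real) \<Rightarrow> (nat \<Rightarrow> 'i mat) \<Rightarrow> (nat \<Rightarrow> real) \<Rightarrow> (nat \<Rightarrow> 'i mat) \<Rightarrow> real" where
  "D0 p \<rho> q \<sigma> = (1/2) * infsum (\<lambda>i. trace_norm (mat_diff (mat_scale (p i) (\<rho> i)) (mat_scale (q i) (\<sigma> i)))) UNIV"

definition Dstar :: "(nat \<Rightarrow> real) \<Rightarrow> (nat \<Rightarrow> ('i::countable) mat) \<Rightarrow> (nat \<Rightarrow> real) \<Rightarrow> (nat \<Rightarrow> 'i mat) \<Rightarrow> real" where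
  "Dstar p \<rho> q \<sigma> = Inf {D0 p' \<rho>' q' \<sigma>' | p' \<rho>' q' \<sigma>'.
       ensemble p' \<rho>' \<and> same_measure p' \<rho>' p \<rho> \<and> ensemble q' \<sigma>' \<and> same_measure q' \<sigma>' q \<sigma>}"

definition coupling :: "(nat \<Rightarrow> nat \<Rightarrow> real) \<Rightarrow> (nat \<Rightarrow> real) \<Rightarrow> (nat \<Rightarrow> real) \<Rightarrow> bool" where
  "coupling P p q \<longleftrightarrow> (\<forall>i j. P i j \<ge> 0) \<and>
     (\<forall>i. ((\<lambda>j. P i j) has_sum p i) UNIV) \<and> (\<forall>j. ((\<lambda>i. P i j) has_sum q j) UNIV)"

definition DK :: "(nat \<Rightarrow> real) \<Rightarrow> (nat \<Rightarrow> 'i mat) \<Rightarrow> (nat \<Rightarrow> real) \<Rightarrow> (nat \<Rightarrow> 'i mat) \<Rightarrow> real" where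
  "DK p \<rho> q \<sigma> = (1/2) * Inf {infsum (\<lambda>(i,j). P i j * trace_norm (mat_diff (\<rho> i) (\<sigma> j))) UNIV
       | P. coupling P p q}"

definition bounded_cont_states :: "(('i::countable) mat \<Rightarrow> real) \<Rightarrow> bool" where
  "bounded_cont_states f \<longleftrightarrow>
     (\<exists>B. \<forall>\<rho>. density \<rho> \<longrightarrow> \<bar>f \<rho>\<bar> \<le> B) \<and>
     (\<forall>\<rho>. density \<rho> \<longrightarrow> (\<forall>e>0. \<exists>d>0. \<forall>\<sigma>. density \<sigma> \<longrightarrow>
         trace_norm (mat_diff \<sigma> \<rho>) < d \<longrightarrow> \<bar>f \<sigma> - f \<rho>\<bar> < e))"

end

theory Submission
  imports Defs
begin

definition hform :: "'i mat \<Rightarrow> 'i set \<Rightarrow> ('i \<Rightarrow> complex) \<Rightarrow> ('i \<Rightarrow> complex) \<Rightarrow> complex" where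
  "hform \<rho> F x y = (\<Sum>k\<in>F. \<Sum>l\<in>F. cnj (x k) * \<rho> k l * y l)"

lemma hform_add_left: "hform \<rho> F (\<lambda>k. x k + y k) z = hform \<rho> F x z + hform \<rho> F y z"
  by (simp add: hform_def algebra_simps sum.distrib)
lemma hform_add_right: "hform \<rho> F z (\<lambda>k. x k + y k) = hform \<rho> F z x + hform \<rho> F z y"
  by (simp add: hform_def algebra_simps sum.distrib)
lemma hform_scale_left: "hform \<rho> F (\<lambda>k. c * x k) z = cnj c * hform \<rho> F x z"
  by (simp add: hform_def sum_distrib_left mult_ac)
lemma hform_scale_right: "hform \<rho> F z (\<lambda>k. c * x k) = c * hform \<rho> F z x"
  by (simp add: hform_def sum_distrib_left mult_ac)

lemma density_form:
  assumes "density \<rho>" "finite F"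
  shows "hform \<rho> F x x \<in> \<real>" "0 \<le> Re (hform \<rho> F x x)"
  using assms unfolding density_def hform_def by auto

lemma hform_herm:
  assumes "density \<rho>" "finite F"
  shows "hform \<rho> F y x = cnj (hform \<rho> F x y)"
proof -
  define a where "a = hform \<rho> F x y"
  define b where "b = hform \<rho> F y x"
  define c where "c = hform \<rho> F x x"
  define d where "d = hform \<rho> F y y"
  have "hform \<rho> F (\<lambda>k. x k + y k) (\<lambda>k. x k + y k) = c + a + b + d"
    by (simp add: hform_add_left hform_add_right a_def b_def c_def d_def)
  moreover have "hform \<rho> F (\<lambda>k. x k + \<i> * y k) (\<lambda>k. x k + \<i> * y k) = c + \<i> * a - \<i> * b + d"
    by (simp add: hform_add_left hform_add_right hform_scale_left hform_scale_right a_def b_def c_def d_def algebra_simps)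
  ultimately have r1: "c + a + b + d \<in> \<real>" and r2: "c + \<i> * a - \<i> * b + d \<in> \<real>"
    using density_form[OF assms] by metis+
  have "c \<in> \<real>" "d \<in> \<real>" using density_form[OF assms] c_def d_def by auto
  then have "Im c = 0" "Im d = 0" by (auto simp: complex_is_Real_iff)
  moreover have "Im (c + a + b + d) = 0" "Im (c + \<i> * a - \<i> * b + d) = 0"
    using r1 r2 by (auto simp: complex_is_Real_iff)
  ultimately have "Im a + Im b = 0" "Re a - Re b = 0" by auto
  then have "b = cnj a" by (simp add: complex_eq_iff)
  then show ?thesis by (simp add: a_def b_def)
qed

lemma hform_CS:
  assumes "density \<rho>" "finite F"
  shows "(cmod (hform \<rho> F x y))\<^sup>2 \<le> Re (hform \<rho> F x x) * Re (hform \<rho> F y y)"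
proof -
  define a where "a = hform \<rho> F x y"
  define X where "X = Re (hform \<rho> F x x)"
  define D where "D = Re (hform \<rho> F y y)"
  have hX: "hform \<rho> F x x = of_real X"
    using density_form(1)[OF assms, of x] by (simp add: X_def complex_eq_iff complex_is_Real_iff)
  have hD: "hform \<rho> F y y = of_real D"
    using density_form(1)[OF assms, of y] by (simp add: D_def complex_eq_iff complex_is_Real_iff)
  have X0: "X \<ge> 0" "D \<ge> 0" using density_form(2)[OF assms] X_def D_def by auto
  have key: "0 \<le> X - 2 * t * (cmod a)\<^sup>2 + t\<^sup>2 * (cmod a)\<^sup>2 * D" for t :: real
  proof -
    define c where "c = - of_real t * cnj a"
    have "hform \<rho> F (\<lambda>k. x k + c * y k) (\<lambda>k. x k + c * y k)
        = hform \<rho> F x x + c * a + cnj c * cnj a + cnj c * c * hform \<rho> F y y"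
      using hform_herm[OF assms, of y x]
      by (simp add: hform_add_left hform_add_right hform_scale_left hform_scale_right a_def algebra_simps)
    also have "\<dots> = of_real (X - 2 * t * (cmod a)\<^sup>2 + t\<^sup>2 * (cmod a)\<^sup>2 * D)"
    proof -
      have m: "a * cnj a = of_real ((cmod a)\<^sup>2)" by (rule complex_norm_square[symmetric])
      have m2: "cnj a * a = of_real ((cmod a)\<^sup>2)" by (metis complex_norm_square mult.commute)
      have "hform \<rho> F x x + c * a + cnj c * cnj a + cnj c * c * hform \<rho> F y y
         = of_real X - of_real t * (a * cnj a) - of_real t * (cnj a * a) + (of_real t)\<^sup>2 * (cnj a * a) * of_real D"
        unfolding c_def hX hD by (simp add: algebra_simps power2_eq_square)
      also have "\<dots> = of_real X - of_real t * of_real ((cmod a)\<^sup>2) - of_real t * of_real ((cmod a)\<^sup>2) + (of_real t)\<^sup>2 * of_real ((cmod a)\<^sup>2) * of_real D"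
        by (simp only: m m2)
      also have "\<dots> = of_real (X - 2 * t * (cmod a)\<^sup>2 + t\<^sup>2 * (cmod a)\<^sup>2 * D)"
        by (simp add: algebra_simps)
      finally show ?thesis .
    qed
    finally show ?thesis using density_form(2)[OF assms, of "\<lambda>k. x k + c * y k"] by simp
  qed
  show ?thesis
  proof (cases "cmod a = 0")
    case True then show ?thesis using X0 by (simp add: a_def[symmetric] X_def[symmetric] D_def[symmetric])
  next
    case False
    then have ap: "(cmod a)\<^sup>2 > 0" by simp
    show ?thesis
    proof (cases "D = 0")
      case True
      have "0 \<le> X - 2 * ((X+1) / (2 * (cmod a)\<^sup>2)) * (cmod a)\<^sup>2" using key[of "(X+1) / (2 * (cmod a)\<^sup>2)"] True by simp
      also have "\<dots> = -1" using ap by (simp add: field_simps)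
      finally show ?thesis by simp
    next
      case False
      then have Dp: "D > 0" using X0 by simp
      have "0 \<le> X - 2 * (1/D) * (cmod a)\<^sup>2 + (1/D)\<^sup>2 * (cmod a)\<^sup>2 * D" using key[of "1/D"] .
      also have "\<dots> = X - (cmod a)\<^sup>2 / D" using Dp by (simp add: field_simps power2_eq_square)
      finally have "(cmod a)\<^sup>2 / D \<le> X" by simp
      then have "(cmod a)\<^sup>2 \<le> X * D" using Dp by (simp add: field_simps)
      then show ?thesis by (simp add: a_def X_def D_def)
    qed
  qed
qed

definition trF :: "'i set \<Rightarrow> 'i mat \<Rightarrow> 'i mat \<Rightarrow> complex" where
  "trF F B T = (\<Sum>i\<in>F. \<Sum>j\<in>F. B i j * T j i)"

definition nrm :: "'i set \<Rightarrow> ('i \<Rightarrow> complex) \<Rightarrow> real" where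
  "nrm F x = (\<Sum>k\<in>F. (cmod (x k))\<^sup>2)"

definition evec :: "'i \<Rightarrow> 'i \<Rightarrow> complex" where
  "evec i = (\<lambda>l. if l = i then 1 else 0)"

lemma contraction_nrm: "contraction_on F B \<longleftrightarrow> (\<forall>x. nrm F (\<lambda>i. \<Sum>j\<in>F. B i j * x j) \<le> nrm F x)"
  by (simp add: contraction_on_def nrm_def)

lemma nrm_nonneg: "nrm F x \<ge> 0"
  by (simp add: nrm_def sum_nonneg)

lemma real_CS_sum:
  fixes f g :: "'a \<Rightarrow> real"
  shows "(\<Sum>i\<in>A. \<bar>f i\<bar> * \<bar>g i\<bar>) \<le> sqrt (\<Sum>i\<in>A. (f i)\<^sup>2) * sqrt (\<Sum>i\<in>A. (g i)\<^sup>2)"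
  using L2_set_mult_ineq[where f=f and g=g and A=A] by (simp add: L2_set_def)

lemma complex_CS_sum:
  fixes x y :: "'a \<Rightarrow> complex"
  shows "cmod (\<Sum>i\<in>A. x i * y i) \<le> sqrt (\<Sum>i\<in>A. (cmod (x i))\<^sup>2) * sqrt (\<Sum>i\<in>A. (cmod (y i))\<^sup>2)"
proof -
  have "cmod (\<Sum>i\<in>A. x i * y i) \<le> (\<Sum>i\<in>A. cmod (x i * y i))" by (rule norm_sum)
  also have "\<dots> = (\<Sum>i\<in>A. \<bar>cmod (x i)\<bar> * \<bar>cmod (y i)\<bar>)" by (simp add: norm_mult)
  also have "\<dots> \<le> sqrt (\<Sum>i\<in>A. (cmod (x i))\<^sup>2) * sqrt (\<Sum>i\<in>A. (cmod (y i))\<^sup>2)" using real_CS_sum[where f="\<lambda>i. cmod (x i)" and A=A and g="\<lambda>i. cmod (y i)"] by simp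
  finally show ?thesis by simp
qed

lemma evec_apply: "evec i l = (if l = i then 1 else 0)" by (simp add: evec_def)

lemma sum_evec_right: "finite F \<Longrightarrow> i \<in> F \<Longrightarrow> (\<Sum>l\<in>F. f l * evec i l) = f i"
  by (simp add: evec_def if_distrib[of "\<lambda>z. f _ * z"] sum.delta' cong: if_cong)

lemma nrm_evec: "finite F \<Longrightarrow> j \<in> F \<Longrightarrow> nrm F (evec j) = 1"
  by (simp add: nrm_def evec_def if_distrib[of "\<lambda>z. (cmod z)\<^sup>2"] sum.delta' cong: if_cong)

lemma contraction_entry:
  assumes "contraction_on F B" "finite F" "i \<in> F" "j \<in> F"
  shows "cmod (B i j) \<le> 1"
proof -
  have "nrm F (\<lambda>i. \<Sum>l\<in>F. B i l * evec j l) \<le> 1"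
    using assms nrm_evec[of F j] unfolding contraction_nrm by metis
  then have "(\<Sum>i\<in>F. (cmod (B i j))\<^sup>2) \<le> 1"
    using assms by (simp add: nrm_def sum_evec_right)
  moreover have "(cmod (B i j))\<^sup>2 \<le> (\<Sum>i\<in>F. (cmod (B i j))\<^sup>2)"
    using assms by (intro member_le_sum) auto
  ultimately have "(cmod (B i j))\<^sup>2 \<le> 1" by linarith
  then show ?thesis by (metis abs_norm_cancel abs_square_le_1) 
qed

lemma nrm_as_sum: "complex_of_real (nrm F z) = (\<Sum>l\<in>F. z l * cnj (z l))"
  unfolding nrm_def of_real_sum by (simp only: complex_norm_square)

lemma nrm_cnj: "nrm F (\<lambda>i. cnj (w i)) = nrm F w"
  by (simp add: nrm_def)

lemma adj_contraction:
  assumes "contraction_on F B" "finite F"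
  shows "nrm F (\<lambda>l. \<Sum>i\<in>F. cnj (B i l) * y i) \<le> nrm F y"
proof -
  define z where "z = (\<lambda>l. \<Sum>i\<in>F. cnj (B i l) * y i)"
  define w where "w = (\<lambda>i. \<Sum>l\<in>F. B i l * z l)"
  have "(\<Sum>l\<in>F. z l * cnj (z l)) = (\<Sum>l\<in>F. \<Sum>i\<in>F. cnj (B i l) * y i * cnj (z l))"
    by (simp add: z_def sum_distrib_right)
  also have "\<dots> = (\<Sum>i\<in>F. \<Sum>l\<in>F. cnj (B i l) * y i * cnj (z l))" by (rule sum.swap)
  also have "\<dots> = (\<Sum>i\<in>F. y i * cnj (w i))"
    by (simp add: w_def sum_distrib_left cnj_sum mult_ac)
  finally have eq: "complex_of_real (nrm F z) = (\<Sum>i\<in>F. y i * cnj (w i))" by (simp add: nrm_as_sum)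
  have "nrm F z = cmod (complex_of_real (nrm F z))" using nrm_nonneg[of F z] by simp
  also have "\<dots> \<le> sqrt (nrm F y) * sqrt (nrm F (\<lambda>i. cnj (w i)))"
    by (subst eq) (unfold nrm_def, rule complex_CS_sum)
  also have "\<dots> \<le> sqrt (nrm F y) * sqrt (nrm F z)"
  proof -
    have "nrm F w \<le> nrm F z" using assms(1) unfolding contraction_nrm w_def by blast
    then show ?thesis by (simp add: nrm_cnj) (intro mult_left_mono real_sqrt_le_mono, auto simp: nrm_nonneg)
  qed
  finally have le: "nrm F z \<le> sqrt (nrm F y) * sqrt (nrm F z)" .
  show ?thesis
  proof (cases "nrm F z = 0")
    case True then show ?thesis using nrm_nonneg[of F y] by (simp add: z_def)
  next
    case False
    then have pos: "sqrt (nrm F z) > 0" using nrm_nonneg[of F z] by simp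
    have "sqrt (nrm F z) * sqrt (nrm F z) \<le> sqrt (nrm F y) * sqrt (nrm F z)"
      using le nrm_nonneg[of F z] by (simp only: real_sqrt_mult_self)
    then have "sqrt (nrm F z) \<le> sqrt (nrm F y)" using pos by (rule mult_right_le_imp_le)
    then show ?thesis by (simp add: z_def)
  qed
qed

lemma BstarB_contraction:
  assumes "contraction_on F B" "finite F"
  shows "contraction_on F (\<lambda>l j. \<Sum>i\<in>F. cnj (B i l) * B i j)"
  unfolding contraction_nrm
proof
  fix x
  have "(\<lambda>l. \<Sum>j\<in>F. (\<Sum>i\<in>F. cnj (B i l) * B i j) * x j) = (\<lambda>l. \<Sum>i\<in>F. cnj (B i l) * (\<Sum>j\<in>F. B i j * x j))"
  proof
    fix l
    have "(\<Sum>j\<in>F. (\<Sum>i\<in>F. cnj (B i l) * B i j) * x j) = (\<Sum>j\<in>F. \<Sum>i\<in>F. cnj (B i l) * B i j * x j)"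
      by (simp add: sum_distrib_right)
    also have "\<dots> = (\<Sum>i\<in>F. \<Sum>j\<in>F. cnj (B i l) * B i j * x j)" by (rule sum.swap)
    also have "\<dots> = (\<Sum>i\<in>F. cnj (B i l) * (\<Sum>j\<in>F. B i j * x j))" by (simp add: sum_distrib_left mult_ac)
    finally show "(\<Sum>j\<in>F. (\<Sum>i\<in>F. cnj (B i l) * B i j) * x j) = (\<Sum>i\<in>F. cnj (B i l) * (\<Sum>j\<in>F. B i j * x j))" .
  qed
  then have "nrm F (\<lambda>l. \<Sum>j\<in>F. (\<Sum>i\<in>F. cnj (B i l) * B i j) * x j) \<le> nrm F (\<lambda>i. \<Sum>j\<in>F. B i j * x j)"
    using adj_contraction[OF assms] by simp
  also have "\<dots> \<le> nrm F x" using assms(1) unfolding contraction_nrm by blast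
  finally show "nrm F (\<lambda>l. \<Sum>j\<in>F. (\<Sum>i\<in>F. cnj (B i l) * B i j) * x j) \<le> nrm F x" .
qed

lemma trF_bound_entries:
  assumes "contraction_on F B" "finite F"
  shows "cmod (trF F B T) \<le> (\<Sum>i\<in>F. \<Sum>j\<in>F. cmod (T j i))"
proof -
  have "cmod (trF F B T) \<le> (\<Sum>i\<in>F. cmod (\<Sum>j\<in>F. B i j * T j i))" unfolding trF_def by (rule norm_sum)
  also have "\<dots> \<le> (\<Sum>i\<in>F. \<Sum>j\<in>F. cmod (B i j * T j i))" by (intro sum_mono norm_sum)
  also have "\<dots> \<le> (\<Sum>i\<in>F. \<Sum>j\<in>F. cmod (T j i))"
    using contraction_entry[OF assms] by (intro sum_mono) (auto simp: norm_mult intro: mult_left_le_one_le)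
  finally show ?thesis .
qed

lemma density_diag:
  assumes "density \<rho>"
  shows "\<rho> i i \<in> \<real>" "Re (\<rho> i i) \<ge> 0"
proof -
  have "hform \<rho> {i} (evec i) (evec i) = \<rho> i i" by (simp add: hform_def evec_def)
  then show "\<rho> i i \<in> \<real>" "Re (\<rho> i i) \<ge> 0" using density_form[OF assms, of "{i}" "evec i"] by auto
qed

lemma density_trace_le:
  assumes "density \<rho>" "finite F"
  shows "(\<Sum>i\<in>F. Re (\<rho> i i)) \<le> 1"
proof -
  have "((\<lambda>i. Re (\<rho> i i)) has_sum 1) UNIV"
    using assms(1) unfolding density_def using has_sum_Re by fastforce
  then show ?thesis using assms density_diag[OF assms(1)] by (intro finite_sum_le_has_sum[where A=UNIV]) auto
qed

lemma hform_cmod_le: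
  assumes "density \<rho>" "finite F"
  shows "cmod (hform \<rho> F x y) \<le> sqrt (Re (hform \<rho> F x x)) * sqrt (Re (hform \<rho> F y y))"
proof -
  have "cmod (hform \<rho> F x y) \<le> sqrt (Re (hform \<rho> F x x) * Re (hform \<rho> F y y))"
    using hform_CS[OF assms, of x y] by (simp add: real_le_rsqrt)
  then show ?thesis by (simp add: real_sqrt_mult)
qed

lemma cnj_evec[simp]: "cnj (evec i k) = evec i k" by (simp add: evec_def)

lemma sum_evec_left: "finite F \<Longrightarrow> i \<in> F \<Longrightarrow> (\<Sum>l\<in>F. evec i l * f l) = f i"
  using sum_evec_right[of F i f] by (simp add: mult.commute)

lemma key_trace_sq:
  assumes "density \<rho>" "finite F" "contraction_on F B"
  shows "(cmod (trF F B \<rho>))\<^sup>2 \<le> cmod (trF F (\<lambda>l j. \<Sum>i\<in>F. cnj (B i l) * B i j) \<rho>)"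
proof -
  define u where "u = (\<lambda>i j. cnj (B i j))"
  define A where "A = (\<lambda>i. Re (hform \<rho> F (u i) (u i)))"
  define b where "b = (\<lambda>i. Re (\<rho> i i))"
  have A0: "A i \<ge> 0" for i using density_form[OF assms(1,2)] by (simp add: A_def)
  have b0: "b i \<ge> 0" for i using density_diag[OF assms(1)] by (simp add: b_def)
  have hb: "Re (hform \<rho> F (evec i) (evec i)) = b i" if "i \<in> F" for i
    using that assms(2) by (simp add: hform_def b_def sum_evec_right cnj_evec sum_evec_left)
  have h1: "trF F B \<rho> = (\<Sum>i\<in>F. hform \<rho> F (u i) (evec i))"
    unfolding trF_def hform_def u_def using assms(2)
    by (intro sum.cong refl) (simp add: sum_evec_right)
  have "cmod (trF F B \<rho>) \<le> (\<Sum>i\<in>F. cmod (hform \<rho> F (u i) (evec i)))"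
    unfolding h1 by (rule norm_sum)
  also have "\<dots> \<le> (\<Sum>i\<in>F. \<bar>sqrt (A i)\<bar> * \<bar>sqrt (b i)\<bar>)"
    using hform_cmod_le[OF assms(1,2)] hb A0 b0 by (intro sum_mono) (metis A_def abs_of_nonneg real_sqrt_ge_zero)
  also have "\<dots> \<le> sqrt (\<Sum>i\<in>F. (sqrt (A i))\<^sup>2) * sqrt (\<Sum>i\<in>F. (sqrt (b i))\<^sup>2)"
    by (rule real_CS_sum)
  also have "\<dots> = sqrt (\<Sum>i\<in>F. A i) * sqrt (\<Sum>i\<in>F. b i)" using A0 b0 by simp
  finally have c1: "cmod (trF F B \<rho>) \<le> sqrt (\<Sum>i\<in>F. A i) * sqrt (\<Sum>i\<in>F. b i)" .
  have sA: "(\<Sum>i\<in>F. A i) \<ge> 0" using A0 by (simp add: sum_nonneg)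
  have sb: "(\<Sum>i\<in>F. b i) \<le> 1" "(\<Sum>i\<in>F. b i) \<ge> 0"
    using density_trace_le[OF assms(1,2)] b0 by (auto simp: b_def sum_nonneg)
  have "(cmod (trF F B \<rho>))\<^sup>2 \<le> (sqrt (\<Sum>i\<in>F. A i) * sqrt (\<Sum>i\<in>F. b i))\<^sup>2"
    using c1 by (intro power_mono) auto
  also have "\<dots> = (\<Sum>i\<in>F. A i) * (\<Sum>i\<in>F. b i)" using sA sb by (simp add: power_mult_distrib)
  also have "\<dots> \<le> (\<Sum>i\<in>F. A i)" using sA sb by (simp add: mult_left_le)
  also have "(\<Sum>i\<in>F. A i) = Re (trF F (\<lambda>l j. \<Sum>i\<in>F. cnj (B i l) * B i j) \<rho>)"
  proof -
    have "(\<Sum>i\<in>F. hform \<rho> F (u i) (u i)) = (\<Sum>i\<in>F. \<Sum>k\<in>F. \<Sum>l\<in>F. B i k * \<rho> k l * cnj (B i l))"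
      by (simp add: hform_def u_def)
    also have "\<dots> = (\<Sum>i\<in>F. \<Sum>l\<in>F. \<Sum>k\<in>F. B i k * \<rho> k l * cnj (B i l))"
      by (rule sum.cong[OF refl], rule sum.swap)
    also have "\<dots> = (\<Sum>l\<in>F. \<Sum>i\<in>F. \<Sum>k\<in>F. B i k * \<rho> k l * cnj (B i l))"
      by (rule sum.swap)
    also have "\<dots> = (\<Sum>l\<in>F. \<Sum>k\<in>F. \<Sum>i\<in>F. B i k * \<rho> k l * cnj (B i l))"
      by (rule sum.cong[OF refl], rule sum.swap)
    also have "\<dots> = trF F (\<lambda>l j. \<Sum>i\<in>F. cnj (B i l) * B i j) \<rho>"
      unfolding trF_def by (simp add: sum_distrib_right sum_distrib_left mult_ac)
    finally show ?thesis by (simp add: A_def flip: Re_sum)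
  qed
  also have "\<dots> \<le> cmod (trF F (\<lambda>l j. \<Sum>i\<in>F. cnj (B i l) * B i j) \<rho>)" by (rule complex_Re_le_cmod)
  finally show ?thesis .
qed

lemma zero_contraction: "contraction_on F (\<lambda>_ _. 0)"
  by (simp add: contraction_on_def sum_nonneg)

lemma key_trace:
  assumes "density \<rho>" "finite F" "contraction_on F B"
  shows "cmod (trF F B \<rho>) \<le> 1"
proof -
  define S where "S = {cmod (trF F B' \<rho>) | B'. contraction_on F B'}"
  have bdd: "bdd_above S"
    unfolding S_def bdd_above_def using trF_bound_entries[OF _ assms(2)] by blast
  have zS: "0 \<in> S" unfolding S_def using zero_contraction[of F]
    by (auto simp: trF_def intro!: exI[of _ "\<lambda>_ _. 0"])
  have mem: "cmod (trF F B' \<rho>) \<in> S" if "contraction_on F B'" for B' using that S_def by blast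
  have s0: "Sup S \<ge> 0" using cSup_upper[OF zS bdd] .
  have "x \<le> sqrt (Sup S)" if "x \<in> S" for x
  proof -
    obtain B' where B': "contraction_on F B'" "x = cmod (trF F B' \<rho>)" using \<open>x \<in> S\<close> S_def by blast
    have "x\<^sup>2 \<le> Sup S"
      unfolding B'(2) using key_trace_sq[OF assms(1,2) B'(1)] cSup_upper[OF mem[OF BstarB_contraction[OF B'(1) assms(2)]] bdd] B'(2)
      by linarith
    then show ?thesis by (simp add: real_le_rsqrt)
  qed
  then have "Sup S \<le> sqrt (Sup S)" using zS by (intro cSup_least) auto
  then have s1: "Sup S \<le> 1"
  proof -
    assume le: "Sup S \<le> sqrt (Sup S)"
    show ?thesis
    proof (rule ccontr)
      assume "\<not> Sup S \<le> 1"
      then have g: "1 < sqrt (Sup S)" by simp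
      have "sqrt (Sup S) * 1 < sqrt (Sup S) * sqrt (Sup S)" using g by (intro mult_strict_left_mono) auto
      then have "sqrt (Sup S) < Sup S" using s0 by simp
      with le show False by simp
    qed
  qed
  show ?thesis using cSup_upper[OF mem[OF assms(3)] bdd] s1 by linarith
qed

definition TS :: "'i mat \<Rightarrow> real set" where
  "TS T = {cmod (trF F B T) | F B. finite F \<and> contraction_on F B}"

lemma trace_norm_TS: "trace_norm T = Sup (TS T)"
  by (simp add: trace_norm_def TS_def trF_def)

lemma trF_diff: "trF F B (mat_diff A C) = trF F B A - trF F B C"
  by (simp add: trF_def mat_diff_def algebra_simps sum_subtractf)

lemma trF_scale: "trF F B (mat_scale a A) = of_real a * trF F B A"
  by (simp add: trF_def mat_scale_def sum_distrib_left mult_ac)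

lemma TS_ne: "0 \<in> TS T"
  unfolding TS_def by (rule CollectI, rule exI[of _ "{}"], rule exI[of _ "\<lambda>_ _. 0"])
    (simp add: trF_def zero_contraction)

lemma tn_upper: "bdd_above (TS T) \<Longrightarrow> finite F \<Longrightarrow> contraction_on F B \<Longrightarrow> cmod (trF F B T) \<le> trace_norm T"
  unfolding trace_norm_TS by (rule cSup_upper) (auto simp: TS_def)

lemma tn_le: "(\<And>F B. finite F \<Longrightarrow> contraction_on F B \<Longrightarrow> cmod (trF F B T) \<le> c) \<Longrightarrow> trace_norm T \<le> c"
  unfolding trace_norm_TS using TS_ne[of T] by (intro cSup_least) (auto simp: TS_def)

lemma tn_nonneg: "bdd_above (TS T) \<Longrightarrow> trace_norm T \<ge> 0"
  unfolding trace_norm_TS using TS_ne[of T] by (rule cSup_upper)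

abbreviation DD :: "real \<Rightarrow> 'i mat \<Rightarrow> real \<Rightarrow> 'i mat \<Rightarrow> 'i mat" where
  "DD a \<rho> b \<sigma> \<equiv> mat_diff (mat_scale a \<rho>) (mat_scale b \<sigma>)"

lemma mat_scale_1[simp]: "mat_scale 1 A = A" by (simp add: mat_scale_def)

lemma trF_DD_le:
  assumes "density \<rho>" "density \<sigma>" "finite F" "contraction_on F B"
  shows "cmod (trF F B (DD a \<rho> b \<sigma>)) \<le> \<bar>a\<bar> + \<bar>b\<bar>"
proof -
  have "cmod (trF F B (DD a \<rho> b \<sigma>)) \<le> cmod (of_real a * trF F B \<rho>) + cmod (of_real b * trF F B \<sigma>)"
    unfolding trF_diff trF_scale by (rule norm_triangle_ineq4)
  also have "\<dots> \<le> \<bar>a\<bar> + \<bar>b\<bar>"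
    unfolding norm_mult using key_trace[OF assms(1,3,4)] key_trace[OF assms(2,3,4)]
    by (auto intro!: add_mono mult_left_le)
  finally show ?thesis by simp
qed

lemma bdd_DD: "density \<rho> \<Longrightarrow> density \<sigma> \<Longrightarrow> bdd_above (TS (DD a \<rho> b \<sigma>))"
  unfolding bdd_above_def TS_def using trF_DD_le by blast

lemma bdd_diff: "density \<rho> \<Longrightarrow> density \<sigma> \<Longrightarrow> bdd_above (TS (mat_diff \<rho> \<sigma>))"
  using bdd_DD[of \<rho> \<sigma> 1 1] by simp

lemma tn_DD_le: "density \<rho> \<Longrightarrow> density \<sigma> \<Longrightarrow> trace_norm (DD a \<rho> b \<sigma>) \<le> \<bar>a\<bar> + \<bar>b\<bar>"
  by (intro tn_le trF_DD_le)

lemma tn_diff_le2: "density \<rho> \<Longrightarrow> density \<sigma> \<Longrightarrow> trace_norm (mat_diff \<rho> \<sigma>) \<le> 2"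
  using tn_DD_le[of \<rho> \<sigma> 1 1] by simp

lemma tn_DD_nonneg: "density \<rho> \<Longrightarrow> density \<sigma> \<Longrightarrow> trace_norm (DD a \<rho> b \<sigma>) \<ge> 0"
  by (intro tn_nonneg bdd_DD)

lemma tn_diff_nonneg: "density \<rho> \<Longrightarrow> density \<sigma> \<Longrightarrow> trace_norm (mat_diff \<rho> \<sigma>) \<ge> 0"
  by (intro tn_nonneg bdd_diff)

lemma tn_DD_same:
  fixes \<rho> \<sigma> :: "'i::countable mat"
  assumes "density \<rho>" "density \<sigma>" "c \<ge> 0"
  shows "trace_norm (DD c \<rho> c \<sigma>) = c * trace_norm (mat_diff \<rho> \<sigma>)"
proof (rule antisym)
  have e: "trF F B (DD c \<rho> c \<sigma>) = of_real c * trF F B (mat_diff \<rho> \<sigma>)" for F B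
    by (simp add: trF_diff trF_scale algebra_simps)
  show "trace_norm (DD c \<rho> c \<sigma>) \<le> c * trace_norm (mat_diff \<rho> \<sigma>)"
  proof (rule tn_le)
    fix F :: "'i set" and B assume FB: "finite F" "contraction_on F B"
    show "cmod (trF F B (DD c \<rho> c \<sigma>)) \<le> c * trace_norm (mat_diff \<rho> \<sigma>)"
      using tn_upper[OF bdd_diff[OF assms(1,2)] FB] assms(3) by (simp add: e norm_mult mult_left_mono)
  qed
  show "c * trace_norm (mat_diff \<rho> \<sigma>) \<le> trace_norm (DD c \<rho> c \<sigma>)"
  proof (cases "c = 0")
    case True then show ?thesis using tn_DD_nonneg[OF assms(1,2)] by simp
  next
    case False
    then have cp: "c > 0" using assms(3) by simp
    have "trace_norm (mat_diff \<rho> \<sigma>) \<le> trace_norm (DD c \<rho> c \<sigma>) / c"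
    proof (rule tn_le)
      fix F :: "'i set" and B assume "finite F" "contraction_on F B"
      then have "cmod (trF F B (DD c \<rho> c \<sigma>)) \<le> trace_norm (DD c \<rho> c \<sigma>)"
        by (intro tn_upper bdd_DD assms)
      then show "cmod (trF F B (mat_diff \<rho> \<sigma>)) \<le> trace_norm (DD c \<rho> c \<sigma>) / c"
        unfolding e using cp by (simp add: norm_mult field_simps)
    qed
    then show ?thesis using cp by (simp add: field_simps)
  qed
qed

lemma tn_mixed:
  fixes \<rho> \<sigma> :: "'i::countable mat"
  assumes "density \<rho>" "density \<sigma>" "q \<ge> 0"
  shows "q * trace_norm (mat_diff \<rho> \<sigma>) \<le> \<bar>q - p\<bar> + trace_norm (DD p \<rho> q \<sigma>)"
proof -
  have "trace_norm (DD q \<rho> q \<sigma>) \<le> \<bar>q - p\<bar> + trace_norm (DD p \<rho> q \<sigma>)"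
  proof (rule tn_le)
    fix F :: "'i set" and B assume FB: "finite F" "contraction_on F B"
    have "trF F B (DD q \<rho> q \<sigma>) = of_real (q - p) * trF F B \<rho> + trF F B (DD p \<rho> q \<sigma>)"
      by (simp add: trF_diff trF_scale algebra_simps)
    then have "cmod (trF F B (DD q \<rho> q \<sigma>)) \<le> \<bar>q - p\<bar> * cmod (trF F B \<rho>) + cmod (trF F B (DD p \<rho> q \<sigma>))"
      by (metis norm_mult norm_of_real norm_triangle_ineq)
    also have "\<dots> \<le> \<bar>q - p\<bar> * 1 + trace_norm (DD p \<rho> q \<sigma>)"
      using key_trace[OF assms(1) FB] tn_upper[OF bdd_DD[OF assms(1,2)] FB]
      by (intro add_mono mult_left_mono) auto
    finally show "cmod (trF F B (DD q \<rho> q \<sigma>)) \<le> \<bar>q - p\<bar> + trace_norm (DD p \<rho> q \<sigma>)" by simp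
  qed
  then show ?thesis using tn_DD_same[OF assms] by simp
qed

lemma tn_triangle:
  fixes x y z :: "'i::countable mat"
  assumes "density x" "density y" "density z"
  shows "trace_norm (mat_diff x z) \<le> trace_norm (mat_diff x y) + trace_norm (mat_diff y z)"
proof (rule tn_le)
  fix F :: "'i set" and B assume FB: "finite F" "contraction_on F B"
  have "trF F B (mat_diff x z) = trF F B (mat_diff x y) + trF F B (mat_diff y z)"
    by (simp add: trF_diff)
  then have "cmod (trF F B (mat_diff x z)) \<le> cmod (trF F B (mat_diff x y)) + cmod (trF F B (mat_diff y z))"
    by (metis norm_triangle_ineq)
  also have "\<dots> \<le> trace_norm (mat_diff x y) + trace_norm (mat_diff y z)"
    using tn_upper[OF bdd_diff[OF assms(1,2)] FB] tn_upper[OF bdd_diff[OF assms(2,3)] FB] by simp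
  finally show "cmod (trF F B (mat_diff x z)) \<le> trace_norm (mat_diff x y) + trace_norm (mat_diff y z)" .
qed

lemma tn_sym: "trace_norm (mat_diff x y) = trace_norm (mat_diff y x)"
proof -
  have "trF F B (mat_diff x y) = - trF F B (mat_diff y x)" for F B by (simp add: trF_diff)
  then have "TS (mat_diff x y) = TS (mat_diff y x)" unfolding TS_def by (metis norm_minus_cancel)
  then show ?thesis by (simp add: trace_norm_TS)
qed

lemma tn_self: "trace_norm (mat_diff x x) = 0"
proof -
  have "TS (mat_diff x x) = {0}" unfolding TS_def
    by (auto simp: trF_diff intro!: exI[of _ "{}"] exI[of _ "\<lambda>_ _. 0"] zero_contraction)
  then show ?thesis by (simp add: trace_norm_TS)
qed

lemma id_contraction: "contraction_on F evec"
  unfolding contraction_on_def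
proof
  fix x :: "'a \<Rightarrow> complex"
  show "(\<Sum>i\<in>F. (cmod (\<Sum>j\<in>F. evec i j * x j))\<^sup>2) \<le> (\<Sum>j\<in>F. (cmod (x j))\<^sup>2)"
  proof (cases "finite F")
    case True
    then show ?thesis by (simp add: sum_evec_left)
  qed simp
qed

lemma trF_id: "finite F \<Longrightarrow> trF F evec T = (\<Sum>i\<in>F. T i i)"
  by (simp add: trF_def sum_evec_left)

lemma tn_DD_ge:
  fixes \<rho> \<sigma> :: "'i::countable mat"
  assumes "density \<rho>" "density \<sigma>"
  shows "\<bar>a - b\<bar> \<le> trace_norm (DD a \<rho> b \<sigma>)"
proof -
  have r: "((\<lambda>F. sum (\<lambda>i. \<rho> i i) F) \<longlongrightarrow> 1) (finite_subsets_at_top UNIV)"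
    using assms(1) unfolding density_def has_sum_def by simp
  have s: "((\<lambda>F. sum (\<lambda>i. \<sigma> i i) F) \<longlongrightarrow> 1) (finite_subsets_at_top UNIV)"
    using assms(2) unfolding density_def has_sum_def by simp
  have lim: "((\<lambda>F. cmod (of_real a * sum (\<lambda>i. \<rho> i i) F - of_real b * sum (\<lambda>i. \<sigma> i i) F))
      \<longlongrightarrow> cmod (of_real a * 1 - of_real b * 1)) (finite_subsets_at_top UNIV)"
    by (intro tendsto_intros r s)
  have ev: "eventually (\<lambda>F. cmod (of_real a * sum (\<lambda>i. \<rho> i i) F - of_real b * sum (\<lambda>i. \<sigma> i i) F)
      \<le> trace_norm (DD a \<rho> b \<sigma>)) (finite_subsets_at_top UNIV)"
  proof (rule eventually_finite_subsets_at_top_weakI)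
    fix F :: "'i set" assume F: "finite F" "F \<subseteq> UNIV"
    have "trF F evec (DD a \<rho> b \<sigma>) = of_real a * sum (\<lambda>i. \<rho> i i) F - of_real b * sum (\<lambda>i. \<sigma> i i) F"
      using F by (simp add: trF_diff trF_scale trF_id)
    then show "cmod (of_real a * sum (\<lambda>i. \<rho> i i) F - of_real b * sum (\<lambda>i. \<sigma> i i) F) \<le> trace_norm (DD a \<rho> b \<sigma>)"
      using tn_upper[OF bdd_DD[OF assms, of a b] F(1) id_contraction] by simp
  qed
  have "cmod (of_real a * 1 - of_real b * 1) \<le> trace_norm (DD a \<rho> b \<sigma>)"
    using tendsto_upperbound[OF lim ev] by simp
  then show ?thesis by (simp flip: of_real_diff)
qed

lemma tn_pos:
  assumes "density x" "density y" "x \<noteq> y"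
  shows "trace_norm (mat_diff x y) > 0"
proof -
  obtain j i where ji: "x j i \<noteq> y j i" using assms(3) by (meson ext)
  define B where "B = (\<lambda>k l. if k = i \<and> l = j then (1::complex) else 0)"
  have fin: "finite {i, j}" by simp
  have con: "contraction_on {i, j} B"
    unfolding contraction_on_def B_def
  proof
    fix z :: "'a \<Rightarrow> complex"
    show "(\<Sum>k\<in>{i, j}. (cmod (\<Sum>l\<in>{i, j}. (if k = i \<and> l = j then 1 else 0) * z l))\<^sup>2) \<le> (\<Sum>l\<in>{i, j}. (cmod (z l))\<^sup>2)"
      by (cases "i = j") auto
  qed
  have "trF {i, j} B (mat_diff x y) = x j i - y j i"
    by (cases "i = j") (auto simp: trF_def B_def mat_diff_def)
  then have "cmod (x j i - y j i) \<le> trace_norm (mat_diff x y)"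
    using tn_upper[OF bdd_diff[OF assms(1,2)] fin con] by simp
  moreover have "cmod (x j i - y j i) > 0" using ji by simp
  ultimately show ?thesis by linarith
qed

lemma has_sum_diff':
  fixes f g :: "'a \<Rightarrow> real"
  assumes "(f has_sum a) A" "(g has_sum b) A"
  shows "((\<lambda>x. f x - g x) has_sum (a - b)) A"
proof -
  have "((\<lambda>x. - g x) has_sum (- b)) A" using assms(2) by (simp add: has_sum_uminus)
  from has_sum_add[OF assms(1) this] show ?thesis by simp
qed

lemma ens_nonneg: "ensemble p \<rho> \<Longrightarrow> p i \<ge> 0" by (simp add: ensemble_def)
lemma ens_has_sum: "ensemble p \<rho> \<Longrightarrow> (p has_sum 1) UNIV" by (simp add: ensemble_def)
lemma ens_dens: "ensemble p \<rho> \<Longrightarrow> density (\<rho> i)" by (simp add: ensemble_def)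

lemma ens_summable: "ensemble p \<rho> \<Longrightarrow> p summable_on A"
  using summable_on_subset[of p UNIV A] ens_has_sum by (auto simp: summable_on_def)

lemma nonneg_summable_le:
  fixes p :: "'a \<Rightarrow> real"
  assumes "p summable_on UNIV" "\<And>i. p i \<ge> 0" "\<And>i. 0 \<le> g i" "\<And>i. g i \<le> C * p i"
  shows "g summable_on A"
proof -
  have "(\<lambda>i. C * p i) summable_on UNIV" using assms(1) by (rule summable_on_cmult_right)
  then have "g summable_on UNIV" by (rule summable_on_comparison_test) (use assms in auto)
  then show ?thesis by (rule summable_on_subset) simp
qed

lemma ens_infsum_le: "ensemble p \<rho> \<Longrightarrow> infsum p A \<le> 1"
proof -
  assume e: "ensemble p \<rho>"
  have "infsum p A \<le> infsum p UNIV"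
    using e by (intro infsum_mono_neutral ens_summable) (auto simp: ens_nonneg)
  then show ?thesis using infsumI[OF ens_has_sum[OF e]] by simp
qed

lemma ens_infsum_nonneg: "ensemble p \<rho> \<Longrightarrow> infsum p A \<ge> 0"
  by (intro infsum_nonneg) (simp add: ens_nonneg)

lemma bnd_summable:
  assumes e: "ensemble p \<rho>" and M: "\<And>s. density s \<Longrightarrow> \<bar>f s\<bar> \<le> M"
  shows "(\<lambda>i. p i * f (\<rho> i)) summable_on A"
proof -
  have M0: "M \<ge> 0" using M[OF ens_dens[OF e, of 0]] by simp
  have "(\<lambda>i. M * p i) summable_on UNIV" using ens_summable[OF e] by (rule summable_on_cmult_right)
  then have "(\<lambda>i. norm (M * p i)) summable_on UNIV"
    using M0 ens_nonneg[OF e] by (simp add: abs_mult)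
  then have "(\<lambda>i. norm (p i * f (\<rho> i))) summable_on UNIV"
  proof (rule summable_on_comparison_test)
    fix i show "norm (p i * f (\<rho> i)) \<le> norm (M * p i)"
      using M[OF ens_dens[OF e, of i]] ens_nonneg[OF e, of i] M0
      by (simp add: abs_mult) (metis mult.commute mult_right_mono)
  qed simp
  then have "(\<lambda>i. p i * f (\<rho> i)) summable_on UNIV" by (rule abs_summable_summable)
  then show ?thesis by (rule summable_on_subset) simp
qed

lemma prod_has_sum:
  fixes Q :: "'a \<Rightarrow> 'b \<Rightarrow> real"
  assumes "\<And>i j. Q i j \<ge> 0" "\<And>i. ((\<lambda>j. Q i j) has_sum a i) UNIV" "(a has_sum s) UNIV"
  shows "((\<lambda>(i,j). Q i j) has_sum s) UNIV"
proof -
  have "(\<lambda>(i,j). Q i j) summable_on Sigma UNIV (\<lambda>_. UNIV)"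
    using assms by (intro summable_on_SigmaI[where g=a]) (auto simp: summable_on_def)
  then have "((\<lambda>(i,j). Q i j) has_sum s) (Sigma UNIV (\<lambda>_. UNIV))"
    using assms by (intro has_sum_SigmaI[where g=a]) auto
  then show ?thesis by simp
qed

lemma prod_has_sum_col:
  fixes Q :: "'a \<Rightarrow> 'b \<Rightarrow> real"
  assumes "\<And>i j. Q i j \<ge> 0" "\<And>j. ((\<lambda>i. Q i j) has_sum b j) UNIV" "(b has_sum s) UNIV"
  shows "((\<lambda>(i,j). Q i j) has_sum s) UNIV"
proof -
  have "((\<lambda>(j,i). Q i j) has_sum s) UNIV" using prod_has_sum[of "\<lambda>j i. Q i j" b s] assms by auto
  then have "((\<lambda>(j,i). Q i j) has_sum s) (UNIV \<times> UNIV)" by simp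
  then have "((\<lambda>(x,y). (\<lambda>(j,i). Q i j) (y,x)) has_sum s) (UNIV \<times> UNIV)" using has_sum_swap by blast
  then show ?thesis by simp
qed

lemma coupling_total:
  assumes "coupling P p q" "ensemble p \<rho>"
  shows "((\<lambda>(i,j). P i j) has_sum 1) UNIV"
  using assms by (intro prod_has_sum[where a=p]) (auto simp: coupling_def ensemble_def)

lemma coupling_summable:
  assumes "coupling P p q" "ensemble p \<rho>" "\<And>i j. \<bar>g i j\<bar> \<le> C"
  shows "(\<lambda>(i,j). P i j * g i j) summable_on A"
proof -
  have P0: "P i j \<ge> 0" for i j using assms(1) by (simp add: coupling_def)
  have C0: "C \<ge> 0" using assms(3)[of 0 0] by simp
  have "((\<lambda>x. C * (\<lambda>(i,j). P i j) x) has_sum C * 1) UNIV"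
    using coupling_total[OF assms(1,2)] by (rule has_sum_cmult_right)
  moreover have "(\<lambda>(i,j). C * P i j) = (\<lambda>x. C * (\<lambda>(i,j). P i j) x)" by (auto simp: fun_eq_iff)
  ultimately have "(\<lambda>(i,j). C * P i j) summable_on UNIV"
    unfolding summable_on_def by metis
  moreover have "(\<lambda>x. norm ((\<lambda>(i,j). C * P i j) x)) = (\<lambda>(i,j). C * P i j)"
    using C0 P0 by (auto simp: fun_eq_iff abs_mult)
  ultimately have "(\<lambda>x. norm ((\<lambda>(i,j). C * P i j) x)) summable_on UNIV" by simp
  then have "(\<lambda>x. norm ((\<lambda>(i,j). P i j * g i j) x)) summable_on UNIV"
  proof (rule summable_on_comparison_test)
    fix x :: "nat \<times> nat" obtain i j where x: "x = (i,j)" by fastforce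
    show "norm ((\<lambda>(i,j). P i j * g i j) x) \<le> norm ((\<lambda>(i,j). C * P i j) x)"
      unfolding x using assms(3)[of i j] P0[of i j] C0 by (simp add: abs_mult) (metis mult.commute mult_right_mono)
  qed simp
  then have "(\<lambda>(i,j). P i j * g i j) summable_on UNIV" by (rule abs_summable_summable)
  then show ?thesis by (rule summable_on_subset) simp
qed

lemma coupling_marg1:
  assumes c: "coupling P p q" and e: "ensemble p \<rho>" and h: "\<And>i. \<bar>h i\<bar> \<le> C"
  shows "((\<lambda>(i,j). P i j * h i) has_sum infsum (\<lambda>i. p i * h i) UNIV) UNIV"
proof -
  have C0: "C \<ge> 0" using h[of 0] by simp
  have rows: "((\<lambda>j. P i j * h i) has_sum (p i * h i)) UNIV" for i
    using c unfolding coupling_def by (intro has_sum_cmult_left) auto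
  have s1: "(\<lambda>(i,j). P i j * h i) summable_on Sigma UNIV (\<lambda>_. UNIV)"
    using coupling_summable[OF c e, of "\<lambda>i j. h i" C] h by simp
  have s2: "(\<lambda>i. p i * h i) summable_on UNIV"
  proof -
    have "(\<lambda>i. C * p i) summable_on UNIV" using ens_summable[OF e] by (rule summable_on_cmult_right)
    then have "(\<lambda>i. norm (C * p i)) summable_on UNIV" using C0 ens_nonneg[OF e] by (simp add: abs_mult)
    then have "(\<lambda>i. norm (p i * h i)) summable_on UNIV"
      by (rule summable_on_comparison_test)
         (use h ens_nonneg[OF e] C0 in \<open>simp_all add: abs_mult, metis mult.commute mult_right_mono\<close>)
    then show ?thesis by (rule abs_summable_summable)
  qed
  have "((\<lambda>(i,j). P i j * h i) has_sum infsum (\<lambda>i. p i * h i) UNIV) (Sigma UNIV (\<lambda>_. UNIV))"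
    by (rule has_sum_SigmaI[where g="\<lambda>i. p i * h i"]) (use rows s1 s2 in auto)
  then show ?thesis by simp
qed

lemma coupling_marg2:
  assumes c: "coupling P p q" and e: "ensemble p \<rho>" and e2: "ensemble q \<sigma>" and h: "\<And>j. \<bar>h j\<bar> \<le> C"
  shows "((\<lambda>(i,j). P i j * h j) has_sum infsum (\<lambda>j. q j * h j) UNIV) UNIV"
proof -
  define P' where "P' = (\<lambda>j i. P i j)"
  have c': "coupling P' q p" using c by (auto simp: coupling_def P'_def)
  have "((\<lambda>(j,i). P' j i * h j) has_sum infsum (\<lambda>j. q j * h j) UNIV) UNIV"
    by (rule coupling_marg1[OF c' e2 h])
  then have "((\<lambda>(j,i). P' j i * h j) has_sum infsum (\<lambda>j. q j * h j) UNIV) (UNIV \<times> UNIV)" by simp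
  then have "((\<lambda>(x,y). (\<lambda>(j,i). P' j i * h j) (y,x)) has_sum infsum (\<lambda>j. q j * h j) UNIV) (UNIV \<times> UNIV)"
    using has_sum_swap by blast
  then show ?thesis by (simp add: P'_def)
qed

definition W :: "(nat \<Rightarrow> real) \<Rightarrow> (nat \<Rightarrow> 'i mat) \<Rightarrow> ('i mat \<Rightarrow> real) \<Rightarrow> real" where
  "W p \<rho> f = infsum (\<lambda>i. p i * f (\<rho> i)) UNIV"

definition cost :: "(nat \<Rightarrow> nat \<Rightarrow> real) \<Rightarrow> (nat \<Rightarrow> 'i mat) \<Rightarrow> (nat \<Rightarrow> 'i mat) \<Rightarrow> real" where
  "cost P \<rho> \<sigma> = infsum (\<lambda>(i,j). P i j * trace_norm (mat_diff (\<rho> i) (\<sigma> j))) UNIV"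

lemma DK_cost: "DK p \<rho> q \<sigma> = (1/2) * Inf {cost P \<rho> \<sigma> | P. coupling P p q}"
  by (simp add: DK_def cost_def)

lemma W_fiber:
  assumes e: "ensemble p \<rho>" and M: "\<And>s. density s \<Longrightarrow> \<bar>f s\<bar> \<le> M"
  shows "((\<lambda>s. f s * infsum p {i. \<rho> i = s}) has_sum W p \<rho> f) UNIV"
proof -
  define g where "g = (\<lambda>i. p i * f (\<rho> i))"
  define k where "k = (\<lambda>i::nat. (\<rho> i, i))"
  define h where "h = (\<lambda>(s::'a mat, i::nat). g i)"
  have sg: "g summable_on A" for A unfolding g_def by (rule bnd_summable[OF e M])
  have inj: "inj k" unfolding k_def by (auto intro: injI)
  have img: "k ` UNIV = Sigma UNIV (\<lambda>s. {i. \<rho> i = s})" unfolding k_def by auto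
  have hk: "h \<circ> k = g" unfolding h_def k_def by auto
  have "(g has_sum W p \<rho> f) UNIV" unfolding W_def g_def[symmetric] using sg[of UNIV] by simp
  then have "(h has_sum W p \<rho> f) (k ` UNIV)" using has_sum_reindex[OF inj, of h] hk by simp
  then have "(h has_sum W p \<rho> f) (Sigma UNIV (\<lambda>s. {i. \<rho> i = s}))" using img by simp
  then have "((\<lambda>s. infsum g {i. \<rho> i = s}) has_sum W p \<rho> f) UNIV"
    by (rule has_sum_SigmaD) (simp add: h_def sg)
  moreover have "infsum g {i. \<rho> i = s} = f s * infsum p {i. \<rho> i = s}" for s
  proof -
    have "infsum g {i. \<rho> i = s} = infsum (\<lambda>i. f s * p i) {i. \<rho> i = s}"
      by (rule infsum_cong) (simp add: g_def mult.commute)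
    also have "\<dots> = f s * infsum p {i. \<rho> i = s}"
      using ens_summable[OF e] by (simp add: infsum_cmult_right)
    finally show ?thesis .
  qed
  ultimately show ?thesis by simp
qed

lemma W_invariant:
  assumes sm: "same_measure p \<rho> q \<sigma>" and e1: "ensemble p \<rho>" and e2: "ensemble q \<sigma>"
    and M: "\<And>s. density s \<Longrightarrow> \<bar>f s\<bar> \<le> M"
  shows "W p \<rho> f = W q \<sigma> f"
proof -
  have eq: "infsum p {i. \<rho> i = s} = infsum q {i. \<sigma> i = s}" for s
  proof -
    have "infsum p {i. \<rho> i \<in> {s}} = infsum q {i. \<sigma> i \<in> {s}}"
      using sm unfolding same_measure_def by blast
    then show ?thesis by simp
  qed
  show ?thesis
    using W_fiber[OF e1 M] W_fiber[OF e2 M] unfolding eq by (rule has_sum_unique)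
qed

lemma surj_image_Collect:
  assumes "surj d" shows "d ` {k. Q (d k)} = {x. Q x}"
proof -
  have "x \<in> d ` {k. Q (d k)}" if "Q x" for x
  proof -
    obtain k where "x = d k" using assms by (metis surjD)
    then show ?thesis using that by auto
  qed
  then show ?thesis by auto
qed

lemma coupling_rows_set:
  assumes c: "coupling P p q" and e: "ensemble p \<rho>"
  shows "infsum (\<lambda>(i,j). P i j) {x. fst x \<in> I} = infsum p I"
proof -
  have P0: "P i j \<ge> 0" for i j using c by (simp add: coupling_def)
  have tot: "((\<lambda>(i,j). P i j) has_sum 1) UNIV" by (rule coupling_total[OF c e])
  have s: "(\<lambda>(i,j). P i j) summable_on {x. fst x \<in> I}"
    using tot summable_on_subset[of "\<lambda>(i,j). P i j" UNIV] by (auto simp: summable_on_def)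
  have "{x. fst x \<in> I} = Sigma I (\<lambda>_. UNIV)" by auto
  then have "((\<lambda>(i,j). P i j) has_sum infsum (\<lambda>(i,j). P i j) {x. fst x \<in> I}) (Sigma I (\<lambda>_. UNIV))"
    using s by (metis has_sum_infsum)
  then have "(p has_sum infsum (\<lambda>(i,j). P i j) {x. fst x \<in> I}) I"
    by (rule has_sum_SigmaD) (use c in \<open>auto simp: coupling_def\<close>)
  then show ?thesis by (simp add: infsumI)
qed

lemma coupling_transpose: "coupling P p q \<Longrightarrow> coupling (\<lambda>j i. P i j) q p"
  by (auto simp: coupling_def)

lemma coupling_cols_set:
  assumes c: "coupling P p q" and e: "ensemble q \<sigma>"
  shows "infsum (\<lambda>(i,j). P i j) {x. snd x \<in> I} = infsum q I"
proof -
  have "infsum (\<lambda>(j,i). P i j) {x. fst x \<in> I} = infsum q I"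
    using coupling_rows_set[OF coupling_transpose[OF c] e] by simp
  moreover have "prod.swap ` {x. snd x \<in> I} = {x. fst x \<in> I}"
    using surj_image_Collect[of prod.swap "\<lambda>y. fst y \<in> I"] by simp
  then have "{x. fst x \<in> I} = prod.swap ` {x. snd x \<in> I}" by (rule sym)
  moreover have "infsum (\<lambda>(j,i). P i j) (prod.swap ` {x. snd x \<in> I}) = infsum ((\<lambda>(j,i). P i j) \<circ> prod.swap) {x. snd x \<in> I}"
    by (rule infsum_reindex) simp
  moreover have "(\<lambda>(j,i). P i j) \<circ> prod.swap = (\<lambda>(i,j). P i j)" by auto
  ultimately show ?thesis by metis
qed

lemma D0_nonneg:
  assumes "ensemble p \<rho>" "ensemble q \<sigma>"
  shows "D0 p \<rho> q \<sigma> \<ge> 0"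
  unfolding D0_def using assms by (auto intro!: infsum_nonneg tn_DD_nonneg ens_dens)

lemma Dstar_set_ne:
  assumes "ensemble p \<rho>" "ensemble q \<sigma>"
  shows "D0 p \<rho> q \<sigma> \<in> {D0 p' \<rho>' q' \<sigma>' | p' \<rho>' q' \<sigma>'.
       ensemble p' \<rho>' \<and> same_measure p' \<rho>' p \<rho> \<and> ensemble q' \<sigma>' \<and> same_measure q' \<sigma>' q \<sigma>}"
  using assms by (auto simp: same_measure_def)

lemma Dstar_bdd:
  "bdd_below {D0 p' \<rho>' q' \<sigma>' | p' \<rho>' q' \<sigma>'.
       ensemble p' \<rho>' \<and> same_measure p' \<rho>' p \<rho> \<and> ensemble q' \<sigma>' \<and> same_measure q' \<sigma>' q \<sigma>}"
  by (rule bdd_belowI[of _ 0]) (auto intro: D0_nonneg)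

lemma Dstar_nonneg:
  assumes "ensemble p \<rho>" "ensemble q \<sigma>"
  shows "Dstar p \<rho> q \<sigma> \<ge> 0"
  unfolding Dstar_def using Dstar_set_ne[OF assms]
  by (intro cInf_greatest) (auto intro: D0_nonneg)

lemma Dstar_le_D0:
  assumes "ensemble p' \<rho>'" "same_measure p' \<rho>' p \<rho>" "ensemble q' \<sigma>'" "same_measure q' \<sigma>' q \<sigma>"
  shows "Dstar p \<rho> q \<sigma> \<le> D0 p' \<rho>' q' \<sigma>'"
  unfolding Dstar_def by (rule cInf_lower[OF _ Dstar_bdd]) (use assms in blast)

lemma Dstar_le_cost:
  assumes e1: "ensemble p \<rho>" and e2: "ensemble q \<sigma>" and c: "coupling P p q"
  shows "Dstar p \<rho> q \<sigma> \<le> cost P \<rho> \<sigma> / 2"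
proof -
  define d where "d = (prod_decode :: nat \<Rightarrow> nat \<times> nat)"
  define p' where "p' = (\<lambda>k. P (fst (d k)) (snd (d k)))"
  define \<rho>' where "\<rho>' = (\<lambda>k. \<rho> (fst (d k)))"
  define \<sigma>' where "\<sigma>' = (\<lambda>k. \<sigma> (snd (d k)))"
  have P0: "P i j \<ge> 0" for i j using c by (simp add: coupling_def)
  have inj: "inj_on d A" for A unfolding d_def by (rule inj_prod_decode)
  have surj: "d ` UNIV = UNIV" unfolding d_def using surj_prod_decode by simp
  have comp: "(\<lambda>(i,j). P i j) \<circ> d = p'" by (auto simp: p'_def fun_eq_iff split: prod.splits)
  have tot: "((\<lambda>(i,j). P i j) has_sum 1) UNIV" by (rule coupling_total[OF c e1])
  have "(p' has_sum 1) UNIV"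
    using tot has_sum_reindex[OF inj[of UNIV], of "\<lambda>(i,j). P i j" 1] surj comp by simp
  then have e1': "ensemble p' \<rho>'" using P0 e1 by (auto simp: ensemble_def p'_def \<rho>'_def)
  then have e2': "ensemble p' \<sigma>'" using e2 by (auto simp: ensemble_def \<sigma>'_def)
  have sm1: "same_measure p' \<rho>' p \<rho>"
    unfolding same_measure_def
  proof
    fix A
    have im: "d ` {k. \<rho>' k \<in> A} = {x. fst x \<in> {i. \<rho> i \<in> A}}"
      unfolding \<rho>'_def using surj_image_Collect[of d "\<lambda>x. \<rho> (fst x) \<in> A"] surj by simp
    have "infsum p' {k. \<rho>' k \<in> A} = infsum ((\<lambda>(i,j). P i j) \<circ> d) {k. \<rho>' k \<in> A}" by (simp add: comp)
    also have "\<dots> = infsum (\<lambda>(i,j). P i j) (d ` {k. \<rho>' k \<in> A})" by (rule infsum_reindex[symmetric, OF inj])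
    also have "\<dots> = infsum p {i. \<rho> i \<in> A}" unfolding im by (rule coupling_rows_set[OF c e1])
    finally show "infsum p' {i. \<rho>' i \<in> A} = infsum p {i. \<rho> i \<in> A}" .
  qed
  have sm2: "same_measure p' \<sigma>' q \<sigma>"
    unfolding same_measure_def
  proof
    fix A
    have im: "d ` {k. \<sigma>' k \<in> A} = {x. snd x \<in> {i. \<sigma> i \<in> A}}"
      unfolding \<sigma>'_def using surj_image_Collect[of d "\<lambda>x. \<sigma> (snd x) \<in> A"] surj by simp
    have "infsum p' {k. \<sigma>' k \<in> A} = infsum ((\<lambda>(i,j). P i j) \<circ> d) {k. \<sigma>' k \<in> A}" by (simp add: comp)
    also have "\<dots> = infsum (\<lambda>(i,j). P i j) (d ` {k. \<sigma>' k \<in> A})" by (rule infsum_reindex[symmetric, OF inj])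
    also have "\<dots> = infsum q {i. \<sigma> i \<in> A}" unfolding im by (rule coupling_cols_set[OF c e2])
    finally show "infsum p' {i. \<sigma>' i \<in> A} = infsum q {i. \<sigma> i \<in> A}" .
  qed
  have "D0 p' \<rho>' p' \<sigma>' = (1/2) * infsum (\<lambda>k. p' k * trace_norm (mat_diff (\<rho>' k) (\<sigma>' k))) UNIV"
    unfolding D0_def using e1' e2' P0
    by (intro arg_cong[where f="\<lambda>x. (1/2) * x"] infsum_cong tn_DD_same) (auto simp: p'_def ens_dens)
  also have "infsum (\<lambda>k. p' k * trace_norm (mat_diff (\<rho>' k) (\<sigma>' k))) UNIV
      = infsum ((\<lambda>(i,j). P i j * trace_norm (mat_diff (\<rho> i) (\<sigma> j))) \<circ> d) UNIV"
    by (rule infsum_cong) (auto simp: p'_def \<rho>'_def \<sigma>'_def split: prod.splits)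
  also have "\<dots> = cost P \<rho> \<sigma>"
    unfolding cost_def using infsum_reindex[OF inj[of UNIV], of "\<lambda>(i,j). P i j * trace_norm (mat_diff (\<rho> i) (\<sigma> j))"] surj
    by simp
  finally have "D0 p' \<rho>' p' \<sigma>' = cost P \<rho> \<sigma> / 2" by simp
  moreover have "Dstar p \<rho> q \<sigma> \<le> D0 p' \<rho>' p' \<sigma>'" by (rule Dstar_le_D0[OF e1' sm1 e2' sm2])
  ultimately show ?thesis by simp
qed

lemma cost_nonneg:
  assumes "ensemble p \<rho>" "ensemble q \<sigma>" "coupling P p q"
  shows "cost P \<rho> \<sigma> \<ge> 0"
  unfolding cost_def using assms
  by (intro infsum_nonneg) (auto simp: coupling_def intro!: mult_nonneg_nonneg tn_diff_nonneg ens_dens)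

lemma prod_coupling:
  assumes "ensemble p \<rho>" "ensemble q \<sigma>" shows "coupling (\<lambda>i j. p i * q j) p q"
proof -
  have "((\<lambda>j. p i * q j) has_sum p i * 1) UNIV" for i
    using assms(2) unfolding ensemble_def by (intro has_sum_cmult_right) auto
  moreover have "((\<lambda>i. p i * q j) has_sum 1 * q j) UNIV" for j
    using assms(1) unfolding ensemble_def by (intro has_sum_cmult_left) auto
  ultimately show ?thesis using assms unfolding coupling_def ensemble_def by auto
qed

lemma cost_set_ne: "ensemble p \<rho> \<Longrightarrow> ensemble q \<sigma> \<Longrightarrow> {cost P \<rho> \<sigma> | P. coupling P p q} \<noteq> {}"
  using prod_coupling by blast

lemma cost_set_bdd: "ensemble p \<rho> \<Longrightarrow> ensemble q \<sigma> \<Longrightarrow> bdd_below {cost P \<rho> \<sigma> | P. coupling P p q}"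
  by (rule bdd_belowI[of _ 0]) (auto intro: cost_nonneg)

lemma DK_le_cost: "ensemble p \<rho> \<Longrightarrow> ensemble q \<sigma> \<Longrightarrow> coupling P p q \<Longrightarrow> DK p \<rho> q \<sigma> \<le> cost P \<rho> \<sigma> / 2"
proof -
  assume a: "ensemble p \<rho>" "ensemble q \<sigma>" "coupling P p q"
  have "Inf {cost P \<rho> \<sigma> | P. coupling P p q} \<le> cost P \<rho> \<sigma>"
    by (rule cInf_lower[OF _ cost_set_bdd[OF a(1,2)]]) (use a(3) in blast)
  then show ?thesis unfolding DK_cost by simp
qed

lemma DK_nonneg:
  assumes "ensemble p \<rho>" "ensemble q \<sigma>" shows "DK p \<rho> q \<sigma> \<ge> 0"
proof -
  have "0 \<le> Inf {cost P \<rho> \<sigma> | P. coupling P p q}"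
  proof (rule cInf_greatest[OF cost_set_ne[OF assms]])
    fix x assume "x \<in> {cost P \<rho> \<sigma> | P. coupling P p q}"
    then obtain P where "coupling P p q" "x = cost P \<rho> \<sigma>" by blast
    then show "0 \<le> x" using cost_nonneg[OF assms] by simp
  qed
  then show ?thesis unfolding DK_cost by simp
qed

lemma Dstar_le_DK:
  assumes "ensemble p \<rho>" "ensemble q \<sigma>"
  shows "Dstar p \<rho> q \<sigma> \<le> DK p \<rho> q \<sigma>"
proof -
  have "2 * Dstar p \<rho> q \<sigma> \<le> Inf {cost P \<rho> \<sigma> | P. coupling P p q}"
  proof (rule cInf_greatest[OF cost_set_ne[OF assms]])
    fix x assume "x \<in> {cost P \<rho> \<sigma> | P. coupling P p q}"
    then obtain P where "coupling P p q" "x = cost P \<rho> \<sigma>" by blast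
    then show "2 * Dstar p \<rho> q \<sigma> \<le> x" using Dstar_le_cost[OF assms] by fastforce
  qed
  then show ?thesis unfolding DK_cost by simp
qed

lemma DK_near:
  assumes "ensemble p \<rho>" "ensemble q \<sigma>" "\<eta> > 0"
  shows "\<exists>P. coupling P p q \<and> cost P \<rho> \<sigma> < 2 * DK p \<rho> q \<sigma> + \<eta>"
proof -
  have "Inf {cost P \<rho> \<sigma> | P. coupling P p q} < 2 * DK p \<rho> q \<sigma> + \<eta>"
    unfolding DK_cost using assms(3) by simp
  then obtain x where "x \<in> {cost P \<rho> \<sigma> | P. coupling P p q}" "x < 2 * DK p \<rho> q \<sigma> + \<eta>"
    using cInf_lessD[OF cost_set_ne[OF assms(1,2)]] by blast
  then show ?thesis by blast
qed

lemma Dstar_near: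
  assumes "ensemble p \<rho>" "ensemble q \<sigma>" "\<eta> > 0"
  shows "\<exists>p' \<rho>' q' \<sigma>'. ensemble p' \<rho>' \<and> same_measure p' \<rho>' p \<rho> \<and> ensemble q' \<sigma>' \<and> same_measure q' \<sigma>' q \<sigma>
     \<and> D0 p' \<rho>' q' \<sigma>' < Dstar p \<rho> q \<sigma> + \<eta>"
proof -
  have ne: "{D0 p' \<rho>' q' \<sigma>' | p' \<rho>' q' \<sigma>'.
       ensemble p' \<rho>' \<and> same_measure p' \<rho>' p \<rho> \<and> ensemble q' \<sigma>' \<and> same_measure q' \<sigma>' q \<sigma>} \<noteq> {}"
    using Dstar_set_ne[OF assms(1,2)] by blast
  have "Dstar p \<rho> q \<sigma> < Dstar p \<rho> q \<sigma> + \<eta>" using assms(3) by simp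
  from cInf_lessD[OF ne this[unfolded Dstar_def]] show ?thesis unfolding Dstar_def by blast
qed

lemma bc_bound:
  assumes "bounded_cont_states f"
  obtains M where "M \<ge> 0" "\<And>s. density s \<Longrightarrow> \<bar>f s\<bar> \<le> M"
proof -
  obtain B where "\<forall>\<rho>. density \<rho> \<longrightarrow> \<bar>f \<rho>\<bar> \<le> B" using assms unfolding bounded_cont_states_def by blast
  then show ?thesis using that[of "max B 0"] by force
qed

lemma bc_cont:
  assumes "bounded_cont_states f" "density s" "e > 0"
  shows "\<exists>d>0. \<forall>x. density x \<longrightarrow> trace_norm (mat_diff x s) < d \<longrightarrow> \<bar>f x - f s\<bar> < e"
  using assms unfolding bounded_cont_states_def by blast

lemma bc_cont_finite:
  assumes bc: "bounded_cont_states f" and fin: "finite S" and d: "\<And>s. s \<in> S \<Longrightarrow> density s" and e: "e > 0"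
  shows "\<exists>d>0. \<forall>s\<in>S. \<forall>x. density x \<longrightarrow> trace_norm (mat_diff x s) < d \<longrightarrow> \<bar>f x - f s\<bar> < e"
  using fin d
proof (induction S rule: finite_induct)
  case empty then show ?case by (auto intro: exI[of _ 1])
next
  case (insert a S)
  obtain d1 where d1: "d1 > 0" "\<forall>s\<in>S. \<forall>x. density x \<longrightarrow> trace_norm (mat_diff x s) < d1 \<longrightarrow> \<bar>f x - f s\<bar> < e"
    using insert by auto
  obtain d2 where d2: "d2 > 0" "\<forall>x. density x \<longrightarrow> trace_norm (mat_diff x a) < d2 \<longrightarrow> \<bar>f x - f a\<bar> < e"
    using bc_cont[OF bc _ e, of a] insert.prems by auto
  show ?case using d1 d2 by (intro exI[of _ "min d1 d2"]) auto
qed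

lemma choose_J:
  assumes "ensemble q \<sigma>" "r > 0"
  shows "\<exists>J. finite J \<and> 1 - r < sum q J"
proof -
  have "(sum q \<longlongrightarrow> 1) (finite_subsets_at_top UNIV)" using ens_has_sum[OF assms(1)] by (simp add: has_sum_def)
  then have "eventually (\<lambda>F. 1 - r < sum q F) (finite_subsets_at_top UNIV)"
    using assms(2) by (intro order_tendstoD(1)) auto
  then show ?thesis unfolding eventually_finite_subsets_at_top by blast
qed

lemma tail_sum:
  assumes "ensemble q \<sigma>" "finite J"
  shows "infsum q (- J) = 1 - sum q J"
proof -
  have "infsum q (J \<union> - J) = infsum q J + infsum q (- J)"
    by (rule infsum_Un_disjoint) (auto intro: ens_summable[OF assms(1)])
  moreover have "infsum q (J \<union> - J) = 1" using infsumI[OF ens_has_sum[OF assms(1)]] by simp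
  ultimately show ?thesis using assms(2) by simp
qed

lemma indicator_has_sum:
  assumes "ensemble q \<sigma>" "finite J"
  shows "((\<lambda>j. q j * (if j \<in> J then 0 else 1)) has_sum (1 - sum q J)) UNIV"
proof -
  have "((\<lambda>j. if j \<in> J then q j else 0) has_sum sum q J) UNIV"
  proof -
    have "(q has_sum sum q J) J" using assms(2) by simp
    then show ?thesis by (rule has_sum_cong_neutral[THEN iffD1, rotated -1]) auto
  qed
  from has_sum_diff'[OF ens_has_sum[OF assms(1)] this] show ?thesis
    by (rule has_sum_cong[THEN iffD1, rotated]) auto
qed

lemma tn_abs_le2: "density x \<Longrightarrow> density y \<Longrightarrow> \<bar>trace_norm (mat_diff x y)\<bar> \<le> 2"
  using tn_diff_nonneg tn_diff_le2 by (metis abs_of_nonneg)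

lemma coupling_W_bound:
  fixes \<rho> \<sigma> :: "nat \<Rightarrow> 'i::countable mat"
  assumes e1: "ensemble p \<rho>" and e2: "ensemble q \<sigma>" and c: "coupling P p q"
    and M: "\<And>s. density s \<Longrightarrow> \<bar>f s\<bar> \<le> M" and K: "K \<ge> 0" and J: "finite J"
    and pt: "\<And>i j. \<bar>f (\<rho> i) - f (\<sigma> j)\<bar> \<le> \<epsilon> + 2 * M * (if j \<in> J then 0 else 1) + K * trace_norm (mat_diff (\<rho> i) (\<sigma> j))"
  shows "\<bar>W p \<rho> f - W q \<sigma> f\<bar> \<le> \<epsilon> + 2 * M * (1 - sum q J) + K * cost P \<rho> \<sigma>"
proof -
  have P0: "P i j \<ge> 0" for i j using c by (simp add: coupling_def)
  have w1: "((\<lambda>(i,j). P i j * f (\<rho> i)) has_sum W p \<rho> f) UNIV"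
    unfolding W_def using M ens_dens[OF e1] by (intro coupling_marg1[OF c e1, where C=M]) auto
  have w2: "((\<lambda>(i,j). P i j * f (\<sigma> j)) has_sum W q \<sigma> f) UNIV"
    unfolding W_def using M ens_dens[OF e2] by (intro coupling_marg2[OF c e1 e2, where C=M]) auto
  have hd: "((\<lambda>(i,j). P i j * (f (\<rho> i) - f (\<sigma> j))) has_sum (W p \<rho> f - W q \<sigma> f)) UNIV"
    using has_sum_diff'[OF w1 w2] by (rule has_sum_cong[THEN iffD1, rotated]) (auto simp: algebra_simps)
  have g1: "((\<lambda>(i,j). P i j * \<epsilon>) has_sum \<epsilon>) UNIV"
    using coupling_marg1[OF c e1, of "\<lambda>_. \<epsilon>" "\<bar>\<epsilon>\<bar>"] infsumI[OF has_sum_cmult_left[OF ens_has_sum[OF e1], of \<epsilon>]]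
    by simp
  have g2: "((\<lambda>(i,j). P i j * (2 * M * (if j \<in> J then 0 else 1))) has_sum 2 * M * (1 - sum q J)) UNIV"
  proof -
    have "((\<lambda>(i,j). P i j * (if j \<in> J then 0 else 1)) has_sum infsum (\<lambda>j. q j * (if j \<in> J then 0 else 1)) UNIV) UNIV"
      by (rule coupling_marg2[OF c e1 e2, where C=1]) auto
    then have "((\<lambda>(i,j). P i j * (if j \<in> J then 0 else 1)) has_sum (1 - sum q J)) UNIV"
      using infsumI[OF indicator_has_sum[OF e2 J]] by simp
    from has_sum_cmult_right[OF this, of "2 * M"] show ?thesis
      by (rule has_sum_cong[THEN iffD1, rotated]) (auto simp: algebra_simps)
  qed
  have g3: "((\<lambda>(i,j). P i j * (K * trace_norm (mat_diff (\<rho> i) (\<sigma> j)))) has_sum K * cost P \<rho> \<sigma>) UNIV"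
  proof -
    have "(\<lambda>(i,j). P i j * trace_norm (mat_diff (\<rho> i) (\<sigma> j))) summable_on UNIV"
      by (intro coupling_summable[OF c e1, where C=2] tn_abs_le2 ens_dens[OF e1] ens_dens[OF e2])
    then have "((\<lambda>(i,j). P i j * trace_norm (mat_diff (\<rho> i) (\<sigma> j))) has_sum cost P \<rho> \<sigma>) UNIV"
      unfolding cost_def by simp
    from has_sum_cmult_right[OF this, of K] show ?thesis
      by (rule has_sum_cong[THEN iffD1, rotated]) (auto simp: algebra_simps)
  qed
  have g: "((\<lambda>(i,j). P i j * (\<epsilon> + 2 * M * (if j \<in> J then 0 else 1) + K * trace_norm (mat_diff (\<rho> i) (\<sigma> j))))
      has_sum (\<epsilon> + 2 * M * (1 - sum q J) + K * cost P \<rho> \<sigma>)) UNIV"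
    using has_sum_add[OF has_sum_add[OF g1 g2] g3] by (rule has_sum_cong[THEN iffD1, rotated]) (auto simp: algebra_simps)
  have ng: "((\<lambda>x. - (\<lambda>(i,j). P i j * (\<epsilon> + 2 * M * (if j \<in> J then 0 else 1) + K * trace_norm (mat_diff (\<rho> i) (\<sigma> j)))) x)
      has_sum - (\<epsilon> + 2 * M * (1 - sum q J) + K * cost P \<rho> \<sigma>)) UNIV"
    unfolding has_sum_uminus minus_minus by (rule g)
  have le1: "W p \<rho> f - W q \<sigma> f \<le> \<epsilon> + 2 * M * (1 - sum q J) + K * cost P \<rho> \<sigma>"
  proof (rule has_sum_mono[OF hd g])
    fix x :: "nat \<times> nat" obtain i j where x: "x = (i,j)" by fastforce
    show "(\<lambda>(i,j). P i j * (f (\<rho> i) - f (\<sigma> j))) x \<le> (\<lambda>(i,j). P i j * (\<epsilon> + 2 * M * (if j \<in> J then 0 else 1) + K * trace_norm (mat_diff (\<rho> i) (\<sigma> j)))) x"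
      unfolding x using pt[of i j] P0[of i j] by (auto intro!: mult_left_mono simp: abs_le_iff)
  qed
  have le2: "- (\<epsilon> + 2 * M * (1 - sum q J) + K * cost P \<rho> \<sigma>) \<le> W p \<rho> f - W q \<sigma> f"
  proof (rule has_sum_mono[OF ng hd])
    fix x :: "nat \<times> nat" obtain i j where x: "x = (i,j)" by fastforce
    have "- (P i j * (\<epsilon> + 2 * M * (if j \<in> J then 0 else 1) + K * trace_norm (mat_diff (\<rho> i) (\<sigma> j))))
        \<le> P i j * (f (\<rho> i) - f (\<sigma> j))"
      using pt[of i j] P0[of i j] mult_left_mono[of "- (f (\<rho> i) - f (\<sigma> j))" "\<epsilon> + 2 * M * (if j \<in> J then 0 else 1) + K * trace_norm (mat_diff (\<rho> i) (\<sigma> j))" "P i j"]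
      by (auto simp: abs_le_iff algebra_simps)
    then show "(\<lambda>x. - (\<lambda>(i,j). P i j * (\<epsilon> + 2 * M * (if j \<in> J then 0 else 1) + K * trace_norm (mat_diff (\<rho> i) (\<sigma> j)))) x) x \<le> (\<lambda>(i,j). P i j * (f (\<rho> i) - f (\<sigma> j))) x"
      unfolding x by simp
  qed
  show ?thesis using le1 le2 by (simp add: abs_le_iff)
qed

lemma b_imp_c:
  fixes p :: "nat \<Rightarrow> nat \<Rightarrow> real" and \<rho> :: "nat \<Rightarrow> nat \<Rightarrow> ('i::countable) mat"
  assumes e0: "ensemble p0 \<rho>0" and en: "\<And>n. ensemble (p n) (\<rho> n)"
    and lim: "(\<lambda>n. DK (p n) (\<rho> n) p0 \<rho>0) \<longlonglongrightarrow> 0" and bc: "bounded_cont_states f"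
  shows "(\<lambda>n. W (p n) (\<rho> n) f) \<longlonglongrightarrow> W p0 \<rho>0 f"
  unfolding tendsto_iff
proof (intro allI impI)
  fix r :: real assume r: "r > 0"
  obtain M where M0: "M \<ge> 0" and M: "\<And>s. density s \<Longrightarrow> \<bar>f s\<bar> \<le> M" using bc_bound[OF bc] by blast
  define \<epsilon> where "\<epsilon> = r / 4"
  have "r / (8 * (M + 1)) > 0" using r M0 by simp
  then obtain J where J: "finite J" "1 - r / (8 * (M + 1)) < sum p0 J" using choose_J[OF e0] by blast
  have "\<exists>d>0. \<forall>s\<in>\<rho>0 ` J. \<forall>x. density x \<longrightarrow> trace_norm (mat_diff x s) < d \<longrightarrow> \<bar>f x - f s\<bar> < \<epsilon>"
    using r J(1) ens_dens[OF e0] by (intro bc_cont_finite[OF bc]) (auto simp: \<epsilon>_def)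
  then obtain \<delta> where \<delta>: "\<delta> > 0" "\<And>j x. j \<in> J \<Longrightarrow> density x \<Longrightarrow> trace_norm (mat_diff x (\<rho>0 j)) < \<delta> \<Longrightarrow> \<bar>f x - f (\<rho>0 j)\<bar> < \<epsilon>"
    by blast
  define K where "K = 2 * M / \<delta>"
  have K0: "K \<ge> 0" using M0 \<delta>(1) by (simp add: K_def)
  define \<eta> where "\<eta> = r / (12 * (K + 1))"
  have \<eta>0: "\<eta> > 0" using r K0 by (simp add: \<eta>_def)
  have ev: "eventually (\<lambda>n. DK (p n) (\<rho> n) p0 \<rho>0 < \<eta>) sequentially"
    using order_tendstoD(2)[OF lim \<eta>0] .
  show "eventually (\<lambda>n. dist (W (p n) (\<rho> n) f) (W p0 \<rho>0 f) < r) sequentially"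
  proof (rule eventually_mono[OF ev])
    fix n assume dk: "DK (p n) (\<rho> n) p0 \<rho>0 < \<eta>"
    obtain P where P: "coupling P (p n) p0" "cost P (\<rho> n) \<rho>0 < 2 * DK (p n) (\<rho> n) p0 \<rho>0 + \<eta>"
      using DK_near[OF en e0 \<eta>0] by blast
    have c0: "cost P (\<rho> n) \<rho>0 \<ge> 0" by (rule cost_nonneg[OF en e0 P(1)])
    have c3: "cost P (\<rho> n) \<rho>0 < 3 * \<eta>" using P(2) dk by simp
    have pt: "\<bar>f (\<rho> n i) - f (\<rho>0 j)\<bar> \<le> \<epsilon> + 2 * M * (if j \<in> J then 0 else 1) + K * trace_norm (mat_diff (\<rho> n i) (\<rho>0 j))" for i j
    proof -
      have di: "density (\<rho> n i)" "density (\<rho>0 j)" using ens_dens en e0 by blast+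
      have t0: "trace_norm (mat_diff (\<rho> n i) (\<rho>0 j)) \<ge> 0" using tn_diff_nonneg[OF di] .
      have d2: "\<bar>f (\<rho> n i) - f (\<rho>0 j)\<bar> \<le> 2 * M" using M[OF di(1)] M[OF di(2)] by linarith
      have e0': "\<epsilon> \<ge> 0" using r by (simp add: \<epsilon>_def)
      have Kt: "K * trace_norm (mat_diff (\<rho> n i) (\<rho>0 j)) \<ge> 0" using K0 t0 by simp
      show ?thesis
      proof (cases "j \<in> J")
        case False then show ?thesis using d2 e0' Kt by simp
      next
        case True
        show ?thesis
        proof (cases "trace_norm (mat_diff (\<rho> n i) (\<rho>0 j)) < \<delta>")
          case True
          then show ?thesis using \<delta>(2)[OF \<open>j \<in> J\<close> di(1)] Kt M0 by simp
        next
          case False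
          then have "K * \<delta> \<le> K * trace_norm (mat_diff (\<rho> n i) (\<rho>0 j))" using K0 by (intro mult_left_mono) auto
          moreover have "K * \<delta> = 2 * M" using \<delta>(1) by (simp add: K_def)
          ultimately show ?thesis using d2 e0' \<open>j \<in> J\<close> by simp
        qed
      qed
    qed
    have bnd: "\<bar>W (p n) (\<rho> n) f - W p0 \<rho>0 f\<bar> \<le> \<epsilon> + 2 * M * (1 - sum p0 J) + K * cost P (\<rho> n) \<rho>0"
      by (rule coupling_W_bound[OF en e0 P(1) M K0 J(1) pt])
    have b1: "2 * M * (1 - sum p0 J) \<le> r / 4"
    proof -
      have "2 * M * (1 - sum p0 J) \<le> 2 * M * (r / (8 * (M + 1)))" using J(2) M0 by (intro mult_left_mono) auto
      also have "\<dots> = (r / 4) * (M / (M + 1))" using M0 by (simp add: field_simps)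
      also have "\<dots> \<le> (r / 4) * 1" using r M0 by (intro mult_left_mono) auto
      finally show ?thesis by simp
    qed
    have b2: "K * cost P (\<rho> n) \<rho>0 \<le> r / 4"
    proof -
      have "K * cost P (\<rho> n) \<rho>0 \<le> K * (3 * \<eta>)" using c3 K0 by (intro mult_left_mono) auto
      also have "\<dots> = (r / 4) * (K / (K + 1))" using K0 by (simp add: \<eta>_def field_simps)
      also have "\<dots> \<le> (r / 4) * 1" using r K0 by (intro mult_left_mono) auto
      finally show ?thesis by simp
    qed
    show "dist (W (p n) (\<rho> n) f) (W p0 \<rho>0 f) < r"
      using bnd b1 b2 r by (simp add: dist_real_def \<epsilon>_def)
  qed
qed

lemma D0_W_bound:
  fixes \<rho> \<sigma> :: "nat \<Rightarrow> 'i::countable mat"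
  assumes e1: "ensemble p \<rho>" and e2: "ensemble q \<sigma>"
    and M: "\<And>s. density s \<Longrightarrow> \<bar>f s\<bar> \<le> M" and K: "K \<ge> 0"
    and pt: "\<And>k. \<bar>p k * f (\<rho> k) - q k * f (\<sigma> k)\<bar> \<le> \<epsilon> * q k + 2 * M * (if \<sigma> k \<in> S then 0 else q k)
              + K * trace_norm (DD (p k) (\<rho> k) (q k) (\<sigma> k))"
  shows "\<bar>W p \<rho> f - W q \<sigma> f\<bar> \<le> \<epsilon> + 2 * M * infsum q {k. \<sigma> k \<notin> S} + K * (2 * D0 p \<rho> q \<sigma>)"
proof -
  define t where "t = (\<lambda>k. trace_norm (DD (p k) (\<rho> k) (q k) (\<sigma> k)))"
  define G where "G = (\<lambda>k. \<epsilon> * q k + 2 * M * (if \<sigma> k \<in> S then 0 else q k) + K * t k)"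
  define V where "V = \<epsilon> + 2 * M * infsum q {k. \<sigma> k \<notin> S} + K * (2 * D0 p \<rho> q \<sigma>)"
  have hd: "((\<lambda>k. p k * f (\<rho> k) - q k * f (\<sigma> k)) has_sum (W p \<rho> f - W q \<sigma> f)) UNIV"
    unfolding W_def by (intro has_sum_diff' has_sum_infsum bnd_summable[OF e1 M] bnd_summable[OF e2 M])
  have g1: "((\<lambda>k. \<epsilon> * q k) has_sum \<epsilon> * 1) UNIV" by (intro has_sum_cmult_right ens_has_sum[OF e2])
  have g2: "((\<lambda>k. 2 * M * (if \<sigma> k \<in> S then 0 else q k)) has_sum 2 * M * infsum q {k. \<sigma> k \<notin> S}) UNIV"
  proof -
    have "(q has_sum infsum q {k. \<sigma> k \<notin> S}) {k. \<sigma> k \<notin> S}" by (intro has_sum_infsum ens_summable[OF e2])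
    then have "((\<lambda>k. if \<sigma> k \<in> S then 0 else q k) has_sum infsum q {k. \<sigma> k \<notin> S}) UNIV"
      by (rule has_sum_cong_neutral[THEN iffD1, rotated -1]) auto
    then show ?thesis by (rule has_sum_cmult_right)
  qed
  have g3: "((\<lambda>k. K * t k) has_sum K * (2 * D0 p \<rho> q \<sigma>)) UNIV"
  proof -
    have "(\<lambda>k. p k + q k) summable_on UNIV"
      using ens_has_sum[OF e1] ens_has_sum[OF e2] has_sum_add unfolding summable_on_def by blast
    then have "t summable_on UNIV"
    proof (rule summable_on_comparison_test)
      fix k
      show "t k \<le> p k + q k" "0 \<le> t k"
        using tn_DD_le[OF ens_dens[OF e1] ens_dens[OF e2], of "p k" k "q k" k]
          tn_DD_nonneg[OF ens_dens[OF e1] ens_dens[OF e2], of "p k" k "q k" k] ens_nonneg[OF e1, of k] ens_nonneg[OF e2, of k]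
        by (auto simp: t_def)
    qed
    then have "(t has_sum 2 * D0 p \<rho> q \<sigma>) UNIV" by (simp add: D0_def t_def)
    then show ?thesis by (rule has_sum_cmult_right)
  qed
  have g: "(G has_sum V) UNIV"
    unfolding G_def V_def using has_sum_add[OF has_sum_add[OF g1 g2] g3] by simp
  have ng: "((\<lambda>k. - G k) has_sum - V) UNIV" unfolding has_sum_uminus minus_minus by (rule g)
  have le1: "W p \<rho> f - W q \<sigma> f \<le> V"
    by (rule has_sum_mono[OF hd g]) (use pt in \<open>auto simp: G_def t_def abs_le_iff\<close>)
  have le2: "- V \<le> W p \<rho> f - W q \<sigma> f"
  proof (rule has_sum_mono[OF ng hd])
    fix k show "- G k \<le> p k * f (\<rho> k) - q k * f (\<sigma> k)"
      using pt[of k] unfolding G_def t_def abs_le_iff by linarith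
  qed
  show ?thesis using le1 le2 unfolding V_def by (simp add: abs_le_iff)
qed

lemma pt_a:
  fixes x y :: "'i::countable mat"
  assumes dx: "density x" and dy: "density y" and p: "p \<ge> 0" and q: "q \<ge> 0"
    and M: "\<And>s. density s \<Longrightarrow> \<bar>f s\<bar> \<le> M" and \<delta>: "\<delta> > 0" and \<epsilon>: "\<epsilon> \<ge> 0"
    and cont: "y \<in> S \<Longrightarrow> trace_norm (mat_diff x y) < \<delta> \<Longrightarrow> \<bar>f x - f y\<bar> < \<epsilon>"
  shows "\<bar>p * f x - q * f y\<bar> \<le> \<epsilon> * q + 2 * M * (if y \<in> S then 0 else q) + (M + 4 * M / \<delta>) * trace_norm (DD p x q y)"
proof -
  define t where "t = trace_norm (DD p x q y)"
  define u where "u = trace_norm (mat_diff x y)"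
  have M0: "M \<ge> 0" using M[OF dx] by simp
  have t0: "t \<ge> 0" unfolding t_def by (rule tn_DD_nonneg[OF dx dy])
  have u0: "u \<ge> 0" unfolding u_def by (rule tn_diff_nonneg[OF dx dy])
  have pq: "\<bar>p - q\<bar> \<le> t" unfolding t_def by (rule tn_DD_ge[OF dx dy])
  have qu: "q * u \<le> 2 * t"
    using tn_mixed[OF dx dy q, of p] pq unfolding t_def u_def by (simp add: abs_minus_commute)
  have d2: "\<bar>f x - f y\<bar> \<le> 2 * M" using M[OF dx] M[OF dy] by linarith
  have A: "\<bar>(p - q) * f x\<bar> \<le> M * t"
    using pq M[OF dx] t0 M0 by (simp add: abs_mult) (metis abs_ge_zero mult.commute mult_mono)
  have B: "q * \<bar>f x - f y\<bar> \<le> \<epsilon> * q + 2 * M * (if y \<in> S then 0 else q) + (4 * M / \<delta>) * t"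
  proof -
    have e1: "\<epsilon> * q \<ge> 0" using \<epsilon> q by simp
    have e2: "(4 * M / \<delta>) * t \<ge> 0" using M0 \<delta> t0 by simp
    show ?thesis
    proof (cases "y \<in> S")
      case False
      then show ?thesis using mult_left_mono[OF d2 q] e1 e2 by (simp add: mult_ac)
    next
      case True
      show ?thesis
      proof (cases "u < \<delta>")
        case True
        then have "\<bar>f x - f y\<bar> \<le> \<epsilon>" using cont \<open>y \<in> S\<close> unfolding u_def by fastforce
        then have "q * \<bar>f x - f y\<bar> \<le> q * \<epsilon>" using q by (rule mult_left_mono)
        then have "q * \<bar>f x - f y\<bar> \<le> \<epsilon> * q" by (simp add: mult.commute)
        then show ?thesis using e2 \<open>y \<in> S\<close> by simp
      next
        case False
        have "q * \<bar>f x - f y\<bar> \<le> q * (2 * M)" using mult_left_mono[OF d2 q] .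
        also have "\<dots> \<le> (q * u / \<delta>) * (2 * M)"
        proof (rule mult_right_mono)
          have "q * 1 \<le> q * (u / \<delta>)" using False \<delta> q by (intro mult_left_mono) auto
          then show "q \<le> q * u / \<delta>" by simp
        qed (use M0 in simp)
        also have "\<dots> \<le> (2 * t / \<delta>) * (2 * M)"
          using qu \<delta> M0 by (intro mult_right_mono divide_right_mono) auto
        also have "\<dots> = (4 * M / \<delta>) * t" by (simp add: field_simps)
        finally show ?thesis using e1 \<open>y \<in> S\<close> by simp
      qed
    qed
  qed
  have "\<bar>p * f x - q * f y\<bar> = \<bar>(p - q) * f x + q * (f x - f y)\<bar>" by (simp add: algebra_simps)
  also have "\<dots> \<le> \<bar>(p - q) * f x\<bar> + q * \<bar>f x - f y\<bar>" using q by (simp add: abs_mult abs_triangle_ineq[THEN order_trans])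
  also have "\<dots> \<le> M * t + (\<epsilon> * q + 2 * M * (if y \<in> S then 0 else q) + (4 * M / \<delta>) * t)" using A B by simp
  also have "\<dots> = \<epsilon> * q + 2 * M * (if y \<in> S then 0 else q) + (M + 4 * M / \<delta>) * t" by (simp add: algebra_simps)
  finally show ?thesis unfolding t_def .
qed

lemma a_imp_c:
  fixes p :: "nat \<Rightarrow> nat \<Rightarrow> real" and \<rho> :: "nat \<Rightarrow> nat \<Rightarrow> ('i::countable) mat"
  assumes e0: "ensemble p0 \<rho>0" and en: "\<And>n. ensemble (p n) (\<rho> n)"
    and lim: "(\<lambda>n. Dstar (p n) (\<rho> n) p0 \<rho>0) \<longlonglongrightarrow> 0" and bc: "bounded_cont_states f"
  shows "(\<lambda>n. W (p n) (\<rho> n) f) \<longlonglongrightarrow> W p0 \<rho>0 f"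
  unfolding tendsto_iff
proof (intro allI impI)
  fix r :: real assume r: "r > 0"
  obtain M where M0: "M \<ge> 0" and M: "\<And>s. density s \<Longrightarrow> \<bar>f s\<bar> \<le> M" using bc_bound[OF bc] by blast
  define \<epsilon> where "\<epsilon> = r / 4"
  have \<epsilon>0: "\<epsilon> \<ge> 0" using r by (simp add: \<epsilon>_def)
  have "r / (8 * (M + 1)) > 0" using r M0 by simp
  then obtain J where J: "finite J" "1 - r / (8 * (M + 1)) < sum p0 J" using choose_J[OF e0] by blast
  define S where "S = \<rho>0 ` J"
  have "\<exists>d>0. \<forall>s\<in>S. \<forall>x. density x \<longrightarrow> trace_norm (mat_diff x s) < d \<longrightarrow> \<bar>f x - f s\<bar> < \<epsilon>"
    using r J(1) ens_dens[OF e0] unfolding S_def by (intro bc_cont_finite[OF bc]) (auto simp: \<epsilon>_def)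
  then obtain \<delta> where \<delta>: "\<delta> > 0" "\<And>s x. s \<in> S \<Longrightarrow> density x \<Longrightarrow> trace_norm (mat_diff x s) < \<delta> \<Longrightarrow> \<bar>f x - f s\<bar> < \<epsilon>"
    by blast
  define K where "K = M + 4 * M / \<delta>"
  have K0: "K \<ge> 0" using M0 \<delta>(1) by (simp add: K_def)
  define \<eta> where "\<eta> = r / (16 * (K + 1))"
  have \<eta>0: "\<eta> > 0" using r K0 by (simp add: \<eta>_def)
  have ev: "eventually (\<lambda>n. Dstar (p n) (\<rho> n) p0 \<rho>0 < \<eta>) sequentially"
    using order_tendstoD(2)[OF lim \<eta>0] .
  have tail: "infsum p0 {j. \<rho>0 j \<notin> S} \<le> 1 - sum p0 J"
  proof -
    have "infsum p0 {j. \<rho>0 j \<notin> S} \<le> infsum p0 (- J)"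
      by (rule infsum_mono_neutral) (auto simp: S_def ens_summable[OF e0] ens_nonneg[OF e0])
    then show ?thesis using tail_sum[OF e0 J(1)] by simp
  qed
  show "eventually (\<lambda>n. dist (W (p n) (\<rho> n) f) (W p0 \<rho>0 f) < r) sequentially"
  proof (rule eventually_mono[OF ev])
    fix n assume ds: "Dstar (p n) (\<rho> n) p0 \<rho>0 < \<eta>"
    obtain p' \<rho>' q' \<sigma>' where E: "ensemble p' \<rho>'" "same_measure p' \<rho>' (p n) (\<rho> n)" "ensemble q' \<sigma>'"
      "same_measure q' \<sigma>' p0 \<rho>0" and D: "D0 p' \<rho>' q' \<sigma>' < Dstar (p n) (\<rho> n) p0 \<rho>0 + \<eta>"
      using Dstar_near[OF en e0 \<eta>0] by blast
    have D2: "D0 p' \<rho>' q' \<sigma>' < 2 * \<eta>" using D ds by simp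
    have D00: "D0 p' \<rho>' q' \<sigma>' \<ge> 0" by (rule D0_nonneg[OF E(1,3)])
    have W1: "W p' \<rho>' f = W (p n) (\<rho> n) f" by (rule W_invariant[OF E(2) E(1) en M])
    have W2: "W q' \<sigma>' f = W p0 \<rho>0 f" by (rule W_invariant[OF E(4) E(3) e0 M])
    have mass: "infsum q' {k. \<sigma>' k \<notin> S} = infsum p0 {j. \<rho>0 j \<notin> S}"
    proof -
      have "infsum q' {k. \<sigma>' k \<in> - S} = infsum p0 {j. \<rho>0 j \<in> - S}"
        using E(4) unfolding same_measure_def by blast
      then show ?thesis by simp
    qed
    have pt: "\<bar>p' k * f (\<rho>' k) - q' k * f (\<sigma>' k)\<bar> \<le> \<epsilon> * q' k + 2 * M * (if \<sigma>' k \<in> S then 0 else q' k)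
              + K * trace_norm (DD (p' k) (\<rho>' k) (q' k) (\<sigma>' k))" for k
    proof -
      have c: "\<bar>f (\<rho>' k) - f (\<sigma>' k)\<bar> < \<epsilon>" if "\<sigma>' k \<in> S" "trace_norm (mat_diff (\<rho>' k) (\<sigma>' k)) < \<delta>"
        using \<delta>(2)[OF that(1) ens_dens[OF E(1)] that(2)] .
      show ?thesis unfolding K_def
        by (rule pt_a[OF ens_dens[OF E(1)] ens_dens[OF E(3)] ens_nonneg[OF E(1)] ens_nonneg[OF E(3)] M \<delta>(1) \<epsilon>0 c])
    qed
    have bnd: "\<bar>W p' \<rho>' f - W q' \<sigma>' f\<bar> \<le> \<epsilon> + 2 * M * infsum q' {k. \<sigma>' k \<notin> S} + K * (2 * D0 p' \<rho>' q' \<sigma>')"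
      by (rule D0_W_bound[OF E(1) E(3) M K0 pt])
    have b1: "2 * M * infsum q' {k. \<sigma>' k \<notin> S} \<le> r / 4"
    proof -
      have "2 * M * infsum q' {k. \<sigma>' k \<notin> S} \<le> 2 * M * (r / (8 * (M + 1)))"
        unfolding mass using tail J(2) M0 by (intro mult_left_mono) auto
      also have "\<dots> = (r / 4) * (M / (M + 1))" using M0 by (simp add: field_simps)
      also have "\<dots> \<le> (r / 4) * 1" using r M0 by (intro mult_left_mono) auto
      finally show ?thesis by simp
    qed
    have b2: "K * (2 * D0 p' \<rho>' q' \<sigma>') \<le> r / 4"
    proof -
      have "K * (2 * D0 p' \<rho>' q' \<sigma>') \<le> K * (4 * \<eta>)" using D2 K0 by (intro mult_left_mono) auto
      also have "\<dots> = (r / 4) * (K / (K + 1))" using K0 by (simp add: \<eta>_def field_simps)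
      also have "\<dots> \<le> (r / 4) * 1" using r K0 by (intro mult_left_mono) auto
      finally show ?thesis by simp
    qed
    show "dist (W (p n) (\<rho> n) f) (W p0 \<rho>0 f) < r"
      using bnd b1 b2 r W1 W2 by (simp add: dist_real_def \<epsilon>_def)
  qed
qed

lemma completion:
  fixes \<rho> \<sigma> :: "nat \<Rightarrow> 'i::countable mat"
  assumes e1: "ensemble p \<rho>" and e2: "ensemble q \<sigma>" and Q0: "\<And>i j. Q i j \<ge> 0"
    and rows: "\<And>i. (\<lambda>j. Q i j) summable_on UNIV" and rowle: "\<And>i. infsum (\<lambda>j. Q i j) UNIV \<le> p i"
    and cols: "\<And>j. ((\<lambda>i. Q i j) has_sum b j) UNIV" and colle: "\<And>j. b j \<le> q j"
    and bm: "(b has_sum m) UNIV"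
    and near: "\<And>i j. Q i j > 0 \<Longrightarrow> trace_norm (mat_diff (\<rho> i) (\<sigma> j)) \<le> \<delta>" and \<delta>: "\<delta> \<ge> 0"
  shows "DK p \<rho> q \<sigma> \<le> (\<delta> + 2 * (1 - m)) / 2"
proof -
  define a where "a = (\<lambda>i. infsum (\<lambda>j. Q i j) UNIV)"
  have ha: "((\<lambda>j. Q i j) has_sum a i) UNIV" for i unfolding a_def using rows by simp
  have a0: "a i \<ge> 0" for i unfolding a_def using Q0 by (simp add: infsum_nonneg)
  have b0: "b j \<ge> 0" for j using has_sum_nonneg[OF cols[of j]] Q0 by simp
  have sa: "a summable_on UNIV"
    using ens_summable[OF e1] by (rule summable_on_comparison_test) (use rowle a0 in \<open>auto simp: a_def\<close>)
  have Qa: "((\<lambda>(i,j). Q i j) has_sum infsum a UNIV) UNIV"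
    by (rule prod_has_sum[OF Q0 ha]) (simp add: sa)
  have Qb: "((\<lambda>(i,j). Q i j) has_sum m) UNIV" by (rule prod_has_sum_col[OF Q0 cols bm])
  have am: "(a has_sum m) UNIV" using has_sum_unique[OF Qa Qb] sa by (metis has_sum_infsum)
  define r where "r = (\<lambda>i. p i - a i)"
  define c where "c = (\<lambda>j. q j - b j)"
  define R where "R = 1 - m"
  have r0: "r i \<ge> 0" for i using rowle[of i] by (simp add: r_def a_def)
  have c0: "c j \<ge> 0" for j using colle[of j] by (simp add: c_def)
  have hr: "(r has_sum R) UNIV" unfolding r_def R_def by (rule has_sum_diff'[OF ens_has_sum[OF e1] am])
  have hc: "(c has_sum R) UNIV" unfolding c_def R_def by (rule has_sum_diff'[OF ens_has_sum[OF e2] bm])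
  have R0: "R \<ge> 0" using has_sum_nonneg[OF hr] r0 by simp
  have rz: "R = 0 \<Longrightarrow> r i = 0" for i using nonneg_has_sum_le_0D[OF hr _ _ UNIV_I, of i] r0 by simp
  have cz: "R = 0 \<Longrightarrow> c j = 0" for j using nonneg_has_sum_le_0D[OF hc _ _ UNIV_I, of j] c0 by simp
  have rc_row: "((\<lambda>j. r i * c j / R) has_sum r i) UNIV" for i
  proof (cases "R = 0")
    case True then show ?thesis using rz[OF True, of i] by simp
  next
    case False
    have "((\<lambda>j. (r i / R) * c j) has_sum (r i / R) * R) UNIV" by (rule has_sum_cmult_right[OF hc])
    then show ?thesis using False by simp
  qed
  have rc_col: "((\<lambda>i. r i * c j / R) has_sum c j) UNIV" for j
  proof (cases "R = 0")
    case True then show ?thesis using cz[OF True, of j] by simp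
  next
    case False
    have "((\<lambda>i. r i * (c j / R)) has_sum R * (c j / R)) UNIV" by (rule has_sum_cmult_left[OF hr])
    then show ?thesis using False by (simp add: mult.commute)
  qed
  have rcR: "((\<lambda>(i,j). r i * c j / R) has_sum R) UNIV"
    by (rule prod_has_sum[OF _ rc_row hr]) (use r0 c0 R0 in simp)
  define P where "P = (\<lambda>i j. Q i j + r i * c j / R)"
  have P0: "P i j \<ge> 0" for i j using Q0[of i j] r0[of i] c0[of j] R0 by (simp add: P_def)
  have cp: "coupling P p q"
    unfolding coupling_def
  proof (intro conjI allI)
    show "0 \<le> P i j" for i j by (rule P0)
    show "((\<lambda>j. P i j) has_sum p i) UNIV" for i
      using has_sum_add[OF ha[of i] rc_row[of i]] by (simp add: P_def r_def)
    show "((\<lambda>i. P i j) has_sum q j) UNIV" for j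
      using has_sum_add[OF cols[of j] rc_col[of j]] by (simp add: P_def c_def)
  qed
  have tn2: "\<bar>trace_norm (mat_diff (\<rho> i) (\<sigma> j))\<bar> \<le> 2" for i j
    by (intro tn_abs_le2 ens_dens[OF e1] ens_dens[OF e2])
  have hcost: "((\<lambda>(i,j). P i j * trace_norm (mat_diff (\<rho> i) (\<sigma> j))) has_sum cost P \<rho> \<sigma>) UNIV"
    unfolding cost_def by (intro has_sum_infsum coupling_summable[OF cp e1 tn2])
  have hg: "((\<lambda>(i,j). \<delta> * Q i j + 2 * (r i * c j / R)) has_sum (\<delta> * m + 2 * R)) UNIV"
  proof -
    have "((\<lambda>x. \<delta> * (\<lambda>(i,j). Q i j) x + 2 * (\<lambda>(i,j). r i * c j / R) x) has_sum (\<delta> * m + 2 * R)) UNIV"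
      by (intro has_sum_add has_sum_cmult_right Qb rcR)
    then show ?thesis by (simp add: case_prod_unfold)
  qed
  have "cost P \<rho> \<sigma> \<le> \<delta> * m + 2 * R"
  proof (rule has_sum_mono[OF hcost hg])
    fix x :: "nat \<times> nat" obtain i j where x: "x = (i,j)" by fastforce
    define t where "t = trace_norm (mat_diff (\<rho> i) (\<sigma> j))"
    have t0: "t \<ge> 0" "t \<le> 2" using tn2[of i j] tn_diff_nonneg[OF ens_dens[OF e1] ens_dens[OF e2]] by (auto simp: t_def)
    have A: "Q i j * t \<le> \<delta> * Q i j"
    proof (cases "Q i j > 0")
      case True then show ?thesis using near[OF True] by (simp add: t_def mult.commute mult_right_mono)
    next
      case False then show ?thesis using Q0[of i j] by simp
    qed
    have B: "(r i * c j / R) * t \<le> 2 * (r i * c j / R)"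
    proof -
      have "0 \<le> r i * c j / R" using r0[of i] c0[of j] R0 by simp
      from mult_left_mono[OF t0(2) this] show ?thesis by (simp add: mult.commute)
    qed
    show "(\<lambda>(i,j). P i j * trace_norm (mat_diff (\<rho> i) (\<sigma> j))) x \<le> (\<lambda>(i,j). \<delta> * Q i j + 2 * (r i * c j / R)) x"
      unfolding x using A B by (simp add: P_def t_def[symmetric] distrib_right)
  qed
  moreover have "m \<le> 1" using has_sum_mono[OF bm ens_has_sum[OF e2]] colle by simp
  moreover have "DK p \<rho> q \<sigma> \<le> cost P \<rho> \<sigma> / 2" by (rule DK_le_cost[OF e1 e2 cp])
  ultimately show ?thesis using \<delta> R0 unfolding R_def
    by (smt (verit, ccfv_SIG) mult_left_le divide_right_mono)
qed

definition bump :: "real \<Rightarrow> 'i mat \<Rightarrow> 'i mat \<Rightarrow> real" where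
  "bump \<delta> s = (\<lambda>x. max 0 (1 - trace_norm (mat_diff x s) / \<delta>))"

lemma tn_lip:
  fixes x y s :: "'i::countable mat"
  assumes "density x" "density y" "density s"
  shows "\<bar>trace_norm (mat_diff x s) - trace_norm (mat_diff y s)\<bar> \<le> trace_norm (mat_diff x y)"
  using tn_triangle[OF assms(1,2,3)] tn_triangle[OF assms(2,1,3)] tn_sym[of x y] by (simp add: abs_le_iff)

lemma max0_lip: "\<bar>max 0 a - max 0 b\<bar> \<le> \<bar>a - b :: real\<bar>"
  by (auto simp: max_def abs_le_iff)

lemma bump_bc:
  fixes s :: "'i::countable mat"
  assumes "\<delta> > 0" "density s"
  shows "bounded_cont_states (bump \<delta> s)"
  unfolding bounded_cont_states_def
proof (intro conjI allI impI)
  show "\<exists>B. \<forall>\<rho>. density \<rho> \<longrightarrow> \<bar>bump \<delta> s \<rho>\<bar> \<le> B"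
  proof (intro exI allI impI)
    fix \<rho> :: "'i mat" assume "density \<rho>"
    then have "trace_norm (mat_diff \<rho> s) \<ge> 0" using tn_diff_nonneg assms(2) by blast
    then show "\<bar>bump \<delta> s \<rho>\<bar> \<le> 1" using assms(1) by (simp add: bump_def)
  qed
  fix \<rho> :: "'i mat" and e :: real assume d\<rho>: "density \<rho>" and e: "e > 0"
  show "\<exists>d>0. \<forall>\<sigma>. density \<sigma> \<longrightarrow> trace_norm (mat_diff \<sigma> \<rho>) < d \<longrightarrow> \<bar>bump \<delta> s \<sigma> - bump \<delta> s \<rho>\<bar> < e"
  proof (intro exI conjI allI impI)
    show "e * \<delta> > 0" using e assms(1) by simp
    fix \<sigma> :: "'i mat" assume d\<sigma>: "density \<sigma>" and lt: "trace_norm (mat_diff \<sigma> \<rho>) < e * \<delta>"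
    have "\<bar>bump \<delta> s \<sigma> - bump \<delta> s \<rho>\<bar> \<le> \<bar>(1 - trace_norm (mat_diff \<sigma> s) / \<delta>) - (1 - trace_norm (mat_diff \<rho> s) / \<delta>)\<bar>"
      unfolding bump_def by (rule max0_lip)
    also have "\<dots> \<le> trace_norm (mat_diff \<sigma> \<rho>) / \<delta>"
    proof -
      define A where "A = trace_norm (mat_diff \<sigma> s)"
      define B where "B = trace_norm (mat_diff \<rho> s)"
      have eq: "(1 - A / \<delta>) - (1 - B / \<delta>) = (B - A) / \<delta>" by (simp add: diff_divide_distrib)
      have "\<bar>A - B\<bar> \<le> trace_norm (mat_diff \<sigma> \<rho>)" unfolding A_def B_def by (rule tn_lip[OF d\<sigma> d\<rho> assms(2)])
      then have le: "\<bar>B - A\<bar> \<le> trace_norm (mat_diff \<sigma> \<rho>)" by (metis abs_minus_commute)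
      have "\<bar>(B - A) / \<delta>\<bar> = \<bar>B - A\<bar> / \<delta>" using assms(1) by (simp add: abs_divide)
      also have "\<dots> \<le> trace_norm (mat_diff \<sigma> \<rho>) / \<delta>" using divide_right_mono[OF le, of \<delta>] assms(1) by simp
      finally have "\<bar>(1 - A / \<delta>) - (1 - B / \<delta>)\<bar> \<le> trace_norm (mat_diff \<sigma> \<rho>) / \<delta>" unfolding eq .
      then show ?thesis unfolding A_def B_def .
    qed
    also have "\<dots> < e" using lt assms(1) by (simp add: field_simps)
    finally show "\<bar>bump \<delta> s \<sigma> - bump \<delta> s \<rho>\<bar> < e" .
  qed
qed

lemma bump_nonneg: "0 \<le> bump \<delta> s x"
  unfolding bump_def by auto

lemma bump_le1: "\<delta> > 0 \<Longrightarrow> density x \<Longrightarrow> density s \<Longrightarrow> bump \<delta> s x \<le> 1"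
  unfolding bump_def using tn_diff_nonneg[of x s] by auto

lemma bump_abs: "\<delta> > 0 \<Longrightarrow> density s \<Longrightarrow> density x \<Longrightarrow> \<bar>bump \<delta> s x\<bar> \<le> 1"
  using bump_nonneg[of \<delta> s x] bump_le1[of \<delta> x s] by simp

lemma bump_self: "bump \<delta> s s = 1" by (simp add: bump_def tn_self)

lemma bump_far: "\<delta> > 0 \<Longrightarrow> trace_norm (mat_diff x s) \<ge> \<delta> \<Longrightarrow> bump \<delta> s x = 0"
  by (simp add: bump_def)

lemma W_bump_ge:
  fixes s :: "'i::countable mat"
  assumes e: "ensemble q \<sigma>" "\<delta> > 0" "density s"
  shows "infsum q {j. \<sigma> j = s} \<le> W q \<sigma> (bump \<delta> s)"
  unfolding W_def
proof (rule infsum_mono_neutral)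
  show "q summable_on {j. \<sigma> j = s}" by (rule ens_summable[OF e(1)])
  show "(\<lambda>i. q i * bump \<delta> s (\<sigma> i)) summable_on UNIV"
    by (rule bnd_summable[OF e(1), where M=1]) (use bump_abs[OF e(2) e(3)] in simp)
  show "q x \<le> q x * bump \<delta> s (\<sigma> x)" if "x \<in> {j. \<sigma> j = s} \<inter> UNIV" for x
    using that by (simp add: bump_self)
  show "q x \<le> 0" if "x \<in> {j. \<sigma> j = s} - UNIV" for x using that by simp
  show "0 \<le> q x * bump \<delta> s (\<sigma> x)" for x using ens_nonneg[OF e(1), of x] bump_nonneg[of \<delta> s "\<sigma> x"] by simp
qed

lemma W_bump_le:
  fixes s :: "'i::countable mat"
  assumes e: "ensemble q \<sigma>" "\<delta> > 0" "density s"
  shows "W q \<sigma> (bump \<delta> s) \<le> infsum q {j. trace_norm (mat_diff (\<sigma> j) s) < \<delta>}"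
  unfolding W_def
proof (rule infsum_mono_neutral)
  show "q summable_on {j. trace_norm (mat_diff (\<sigma> j) s) < \<delta>}" by (rule ens_summable[OF e(1)])
  show "(\<lambda>i. q i * bump \<delta> s (\<sigma> i)) summable_on UNIV"
    by (rule bnd_summable[OF e(1), where M=1]) (use bump_abs[OF e(2) e(3)] in simp)
  show "q x * bump \<delta> s (\<sigma> x) \<le> q x" if "x \<in> UNIV \<inter> {j. trace_norm (mat_diff (\<sigma> j) s) < \<delta>}" for x
    using bump_le1[OF e(2) ens_dens[OF e(1)] e(3), of x] ens_nonneg[OF e(1), of x]
    by (simp add: mult_left_le)
  show "q x * bump \<delta> s (\<sigma> x) \<le> 0" if "x \<in> UNIV - {j. trace_norm (mat_diff (\<sigma> j) s) < \<delta>}" for x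
    using that bump_far[OF e(2), of "\<sigma> x" s] by simp
  show "0 \<le> q x" if "x \<in> {j. trace_norm (mat_diff (\<sigma> j) s) < \<delta>} - UNIV" for x using that by simp
qed

lemma sep_delta:
  fixes S :: "'i::countable mat set"
  assumes fin: "finite S" and d: "\<And>s. s \<in> S \<Longrightarrow> density s" and e: "\<epsilon> > 0"
  shows "\<exists>\<delta>>0. \<delta> \<le> \<epsilon> \<and> (\<forall>s\<in>S. \<forall>s'\<in>S. s \<noteq> s' \<longrightarrow> 2 * \<delta> \<le> trace_norm (mat_diff s s'))"
proof -
  define X where "X = (\<lambda>(s,s'). trace_norm (mat_diff s s') / 2) ` {x \<in> S \<times> S. fst x \<noteq> snd x}"
  have finX: "finite (insert \<epsilon> X)" unfolding X_def using fin by simp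
  have posX: "\<forall>x\<in>insert \<epsilon> X. x > 0"
  proof
    fix x assume "x \<in> insert \<epsilon> X"
    then consider "x = \<epsilon>" | s s' where "s \<in> S" "s' \<in> S" "s \<noteq> s'" "x = trace_norm (mat_diff s s') / 2"
      unfolding X_def by auto
    then show "x > 0"
    proof cases
      case 1 then show ?thesis using e by simp
    next
      case 2 then show ?thesis using tn_pos[OF d[OF 2(1)] d[OF 2(2)] 2(3)] by simp
    qed
  qed
  define \<delta> where "\<delta> = Min (insert \<epsilon> X)"
  have "\<delta> > 0" unfolding \<delta>_def using finX posX by (simp add: Min_gr_iff)
  moreover have "\<delta> \<le> \<epsilon>" unfolding \<delta>_def using finX by simp
  moreover have "2 * \<delta> \<le> trace_norm (mat_diff s s')" if "s \<in> S" "s' \<in> S" "s \<noteq> s'" for s s'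
  proof -
    have "(s, s') \<in> {x \<in> S \<times> S. fst x \<noteq> snd x}" using that by simp
    then have "trace_norm (mat_diff s s') / 2 \<in> X" unfolding X_def by (rule image_eqI[rotated]) simp
    then have "\<delta> \<le> trace_norm (mat_diff s s') / 2" unfolding \<delta>_def by (intro Min_le[OF finX]) simp
    then show ?thesis by simp
  qed
  ultimately show ?thesis by blast
qed

lemma fiber_member_le:
  assumes e: "ensemble q \<sigma>"
  shows "q j \<le> infsum q {k. \<sigma> k = \<sigma> j}"
proof -
  have "(q has_sum infsum q {k. \<sigma> k = \<sigma> j}) {k. \<sigma> k = \<sigma> j}" by (intro has_sum_infsum ens_summable[OF e])
  then have "sum q {j} \<le> infsum q {k. \<sigma> k = \<sigma> j}"
    by (rule finite_sum_le_has_sum) (auto simp: ens_nonneg[OF e])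
  then show ?thesis by simp
qed

lemma c_imp_b:
  fixes p :: "nat \<Rightarrow> nat \<Rightarrow> real" and \<rho> :: "nat \<Rightarrow> nat \<Rightarrow> ('i::countable) mat"
  assumes e0: "ensemble p0 \<rho>0" and en: "\<And>n. ensemble (p n) (\<rho> n)"
    and conv: "\<And>f. bounded_cont_states f \<Longrightarrow> (\<lambda>n. W (p n) (\<rho> n) f) \<longlonglongrightarrow> W p0 \<rho>0 f"
  shows "(\<lambda>n. DK (p n) (\<rho> n) p0 \<rho>0) \<longlonglongrightarrow> 0"
  unfolding tendsto_iff
proof (intro allI impI)
  fix r :: real assume r: "r > 0"
  define \<epsilon> where "\<epsilon> = min (1/2) (r/4)"
  have \<epsilon>: "\<epsilon> > 0" "\<epsilon> \<le> 1/2" "\<epsilon> \<le> r/4" using r by (auto simp: \<epsilon>_def)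
  obtain J where J: "finite J" "1 - \<epsilon> < sum p0 J" using choose_J[OF e0 \<epsilon>(1)] by blast
  define S where "S = \<rho>0 ` J"
  have finS: "finite S" using J(1) by (simp add: S_def)
  have dS: "density s" if "s \<in> S" for s using that ens_dens[OF e0] by (auto simp: S_def)
  obtain \<delta> where \<delta>: "\<delta> > 0" "\<delta> \<le> \<epsilon>" and sep: "\<And>s s'. s \<in> S \<Longrightarrow> s' \<in> S \<Longrightarrow> s \<noteq> s' \<Longrightarrow> 2 * \<delta> \<le> trace_norm (mat_diff s s')"
    using sep_delta[OF finS dS \<epsilon>(1)] by blast
  define m0 where "m0 = (\<lambda>s. infsum p0 {j. \<rho>0 j = s})"
  define mn where "mn = (\<lambda>n s. infsum (p n) {i. trace_norm (mat_diff (\<rho> n i) s) < \<delta>})"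
  have m00: "m0 s \<ge> 0" for s unfolding m0_def by (rule ens_infsum_nonneg[OF e0])
  have mn0: "mn n s \<ge> 0" for n s unfolding mn_def by (rule ens_infsum_nonneg[OF en])
  have evs: "\<forall>s\<in>S. eventually (\<lambda>n. (1 - \<epsilon>) * m0 s \<le> mn n s) sequentially"
  proof
    fix s assume sS: "s \<in> S"
    show "eventually (\<lambda>n. (1 - \<epsilon>) * m0 s \<le> mn n s) sequentially"
    proof (cases "m0 s = 0")
      case True then show ?thesis using mn0 by simp
    next
      case False
      then have mpos: "m0 s > 0" using m00[of s] by simp
      define W0 where "W0 = W p0 \<rho>0 (bump \<delta> s)"
      have W0ge: "m0 s \<le> W0" unfolding m0_def W0_def by (rule W_bump_ge[OF e0 \<delta>(1) dS[OF sS]])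
      have "(1 - \<epsilon>) * W0 < W0" using mpos W0ge \<epsilon>(1) by simp
      then have ev: "eventually (\<lambda>n. (1 - \<epsilon>) * W0 < W (p n) (\<rho> n) (bump \<delta> s)) sequentially"
        unfolding W0_def by (intro order_tendstoD(1)[OF conv] bump_bc[OF \<delta>(1) dS[OF sS]])
      show ?thesis
      proof (rule eventually_mono[OF ev])
        fix n assume "(1 - \<epsilon>) * W0 < W (p n) (\<rho> n) (bump \<delta> s)"
        moreover have "W (p n) (\<rho> n) (bump \<delta> s) \<le> mn n s" unfolding mn_def by (rule W_bump_le[OF en \<delta>(1) dS[OF sS]])
        moreover have "(1 - \<epsilon>) * m0 s \<le> (1 - \<epsilon>) * W0" using W0ge \<epsilon>(2) by (intro mult_left_mono) auto
        ultimately show "(1 - \<epsilon>) * m0 s \<le> mn n s" by linarith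
      qed
    qed
  qed
  have ev: "eventually (\<lambda>n. \<forall>s\<in>S. (1 - \<epsilon>) * m0 s \<le> mn n s) sequentially"
    using eventually_ball_finite[OF finS evs] .
  show "eventually (\<lambda>n. dist (DK (p n) (\<rho> n) p0 \<rho>0) 0 < r) sequentially"
  proof (rule eventually_mono[OF ev])
    fix n assume H: "\<forall>s\<in>S. (1 - \<epsilon>) * m0 s \<le> mn n s"
    define lam where "lam = (\<lambda>s. (1 - \<epsilon>) / mn n s)"
    define Q where "Q = (\<lambda>i j. if \<rho>0 j \<in> S \<and> trace_norm (mat_diff (\<rho> n i) (\<rho>0 j)) < \<delta> then p n i * p0 j * lam (\<rho>0 j) else 0)"
    define b where "b = (\<lambda>j. if \<rho>0 j \<in> S then p0 j * (mn n (\<rho>0 j) * lam (\<rho>0 j)) else 0)"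
    have lam0: "lam s \<ge> 0" for s using mn0[of n s] \<epsilon>(2) by (simp add: lam_def)
    have mnlam: "mn n s * lam s = (if mn n s = 0 then 0 else 1 - \<epsilon>)" for s by (simp add: lam_def)
    have Q0: "Q i j \<ge> 0" for i j using lam0 ens_nonneg[OF en] ens_nonneg[OF e0] by (simp add: Q_def)
    have near: "trace_norm (mat_diff (\<rho> n i) (\<rho>0 j)) \<le> \<delta>" if "Q i j > 0" for i j
      using that by (auto simp: Q_def split: if_splits)
    have cols: "((\<lambda>i. Q i j) has_sum b j) UNIV" for j
    proof (cases "\<rho>0 j \<in> S")
      case True
      have "(p n has_sum mn n (\<rho>0 j)) {i. trace_norm (mat_diff (\<rho> n i) (\<rho>0 j)) < \<delta>}"
        unfolding mn_def by (intro has_sum_infsum ens_summable[OF en])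
      then have "((\<lambda>i. p n i * (p0 j * lam (\<rho>0 j))) has_sum mn n (\<rho>0 j) * (p0 j * lam (\<rho>0 j))) {i. trace_norm (mat_diff (\<rho> n i) (\<rho>0 j)) < \<delta>}"
        by (rule has_sum_cmult_left)
      then have "((\<lambda>i. Q i j) has_sum mn n (\<rho>0 j) * (p0 j * lam (\<rho>0 j))) UNIV"
        by (rule has_sum_cong_neutral[THEN iffD1, rotated -1]) (auto simp: Q_def True mult_ac)
      then show ?thesis by (simp add: b_def True mult_ac)
    next
      case False then show ?thesis by (simp add: Q_def b_def)
    qed
    have b0: "b j \<ge> 0" for j using mnlam[of "\<rho>0 j"] \<epsilon>(2) ens_nonneg[OF e0, of j] by (simp add: b_def)
    have colle: "b j \<le> p0 j" for j
    proof -
      have "mn n (\<rho>0 j) * lam (\<rho>0 j) \<le> 1" using mnlam[of "\<rho>0 j"] \<epsilon>(1) by simp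
      then have "p0 j * (mn n (\<rho>0 j) * lam (\<rho>0 j)) \<le> p0 j * 1" using ens_nonneg[OF e0, of j] by (intro mult_left_mono) auto
      then show ?thesis using ens_nonneg[OF e0, of j] by (simp add: b_def)
    qed
    have bsum: "b summable_on UNIV"
      using ens_summable[OF e0] by (rule summable_on_comparison_test) (use b0 colle in auto)
    define m where "m = infsum b UNIV"
    have bm: "(b has_sum m) UNIV" unfolding m_def using bsum by simp
    have mlow: "(1 - \<epsilon>) * sum p0 J \<le> m"
    proof -
      have hJ: "((\<lambda>j. if j \<in> J then (1 - \<epsilon>) * p0 j else 0) has_sum (1 - \<epsilon>) * sum p0 J) UNIV"
      proof -
        have "((\<lambda>j. (1 - \<epsilon>) * p0 j) has_sum (\<Sum>j\<in>J. (1 - \<epsilon>) * p0 j)) J" using J(1) by simp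
        then have "((\<lambda>j. (1 - \<epsilon>) * p0 j) has_sum (1 - \<epsilon>) * sum p0 J) J" by (simp add: sum_distrib_left)
        then show ?thesis by (rule has_sum_cong_neutral[THEN iffD1, rotated -1]) auto
      qed
      show ?thesis
      proof (rule has_sum_mono[OF hJ bm])
        fix j
        show "(if j \<in> J then (1 - \<epsilon>) * p0 j else 0) \<le> b j"
        proof (cases "j \<in> J")
          case False then show ?thesis using b0[of j] by simp
        next
          case True
          then have jS: "\<rho>0 j \<in> S" by (simp add: S_def)
          show ?thesis
          proof (cases "mn n (\<rho>0 j) = 0")
            case False
            then have "mn n (\<rho>0 j) * lam (\<rho>0 j) = 1 - \<epsilon>" using mnlam[of "\<rho>0 j"] by simp
            then have "b j = p0 j * (1 - \<epsilon>)" using jS by (simp add: b_def)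
            then show ?thesis using True by (simp add: mult.commute)
          next
            case z: True
            have "(1 - \<epsilon>) * m0 (\<rho>0 j) \<le> 0" using H jS z by auto
            then have "m0 (\<rho>0 j) \<le> 0" using \<epsilon>(2) by (simp add: mult_le_0_iff)
            moreover have "p0 j \<le> m0 (\<rho>0 j)" unfolding m0_def by (rule fiber_member_le[OF e0])
            ultimately have "(1 - \<epsilon>) * p0 j \<le> 0" using \<epsilon>(2) by (simp add: mult_le_0_iff)
            then show ?thesis using True b0[of j] by simp
          qed
        qed
      qed
    qed
    define L where "L = (\<Sum>s\<in>S. lam s)"
    have lamL: "lam s \<le> L" if "s \<in> S" for s
      unfolding L_def using finS that lam0 by (intro member_le_sum) auto
    have rows: "(\<lambda>j. Q i j) summable_on UNIV" for i
    proof (rule nonneg_summable_le[OF ens_summable[OF e0] ens_nonneg[OF e0] Q0])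
      fix j
      show "Q i j \<le> (p n i * L) * p0 j"
      proof (cases "\<rho>0 j \<in> S \<and> trace_norm (mat_diff (\<rho> n i) (\<rho>0 j)) < \<delta>")
        case True
        then have "p n i * p0 j * lam (\<rho>0 j) \<le> p n i * p0 j * L"
          using lamL ens_nonneg[OF en, of n i] ens_nonneg[OF e0, of j] by (intro mult_left_mono) auto
        then show ?thesis using True by (simp add: Q_def mult_ac)
      next
        case False
        have "0 \<le> (p n i * L) * p0 j"
          using ens_nonneg[OF en, of n i] ens_nonneg[OF e0, of j] lam0 L_def
          by (simp add: sum_nonneg)
        moreover have "Q i j = 0" unfolding Q_def using False by (rule if_not_P)
        ultimately show ?thesis by simp
      qed
    qed
    have rowle: "infsum (\<lambda>j. Q i j) UNIV \<le> p n i" for i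
    proof (cases "\<exists>j0. \<rho>0 j0 \<in> S \<and> trace_norm (mat_diff (\<rho> n i) (\<rho>0 j0)) < \<delta>")
      case False
      then have "infsum (\<lambda>j. Q i j) UNIV = 0" by (intro infsum_0) (auto simp: Q_def)
      then show ?thesis using ens_nonneg[OF en] by simp
    next
      case True
      then obtain j0 where j0: "\<rho>0 j0 \<in> S" "trace_norm (mat_diff (\<rho> n i) (\<rho>0 j0)) < \<delta>" by blast
      define s0 where "s0 = \<rho>0 j0"
      have s0S: "s0 \<in> S" using j0 by (simp add: s0_def)
      have iff: "(\<rho>0 j \<in> S \<and> trace_norm (mat_diff (\<rho> n i) (\<rho>0 j)) < \<delta>) \<longleftrightarrow> \<rho>0 j = s0" for j
      proof
        assume a: "\<rho>0 j \<in> S \<and> trace_norm (mat_diff (\<rho> n i) (\<rho>0 j)) < \<delta>"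
        show "\<rho>0 j = s0"
        proof (rule ccontr)
          assume ne: "\<rho>0 j \<noteq> s0"
          have "trace_norm (mat_diff (\<rho>0 j) s0) \<le> trace_norm (mat_diff (\<rho>0 j) (\<rho> n i)) + trace_norm (mat_diff (\<rho> n i) s0)"
            by (rule tn_triangle[OF ens_dens[OF e0] ens_dens[OF en] dS[OF s0S]])
          also have "\<dots> < 2 * \<delta>" using a j0(2) tn_sym[of "\<rho>0 j" "\<rho> n i"] by (simp add: s0_def)
          finally show False using sep[OF _ s0S ne] a by fastforce
        qed
      next
        assume "\<rho>0 j = s0" then show "\<rho>0 j \<in> S \<and> trace_norm (mat_diff (\<rho> n i) (\<rho>0 j)) < \<delta>"
          using j0 by (simp add: s0_def)
      qed
      have "infsum (\<lambda>j. Q i j) UNIV = infsum (\<lambda>j. (p n i * lam s0) * p0 j) {j. \<rho>0 j = s0}"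
        by (rule infsum_cong_neutral) (auto simp: Q_def iff mult_ac)
      also have "\<dots> = (p n i * lam s0) * m0 s0"
        unfolding m0_def using ens_summable[OF e0] by (simp add: infsum_cmult_right)
      also have "\<dots> \<le> p n i * 1"
      proof -
        have "lam s0 * m0 s0 \<le> 1"
        proof (cases "mn n s0 = 0")
          case True then show ?thesis by (simp add: lam_def)
        next
          case False
          then have mp: "mn n s0 > 0" using mn0[of n s0] by simp
          have "lam s0 * m0 s0 = ((1 - \<epsilon>) * m0 s0) / mn n s0" by (simp add: lam_def)
          also have "\<dots> \<le> 1" using H s0S mp by simp
          finally show ?thesis .
        qed
        from mult_left_mono[OF this ens_nonneg[OF en, of n i]] show ?thesis by (simp add: mult.assoc)
      qed
      finally show ?thesis by simp
    qed
    have DKb: "DK (p n) (\<rho> n) p0 \<rho>0 \<le> (\<delta> + 2 * (1 - m)) / 2"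
      by (rule completion[OF en e0 Q0 rows rowle cols colle bm near less_imp_le[OF \<delta>(1)]])
    have "(1 - \<epsilon>) * (1 - \<epsilon>) \<le> (1 - \<epsilon>) * sum p0 J" using J(2) \<epsilon>(2) by (intro mult_left_mono) auto
    then have "1 - 2 * \<epsilon> \<le> m" using mlow by (simp add: algebra_simps power2_eq_square) (smt (verit) \<epsilon>(1) mult_pos_pos)
    then have "DK (p n) (\<rho> n) p0 \<rho>0 \<le> (\<epsilon> + 4 * \<epsilon>) / 2" using DKb \<delta>(2) by simp
    moreover have "DK (p n) (\<rho> n) p0 \<rho>0 \<ge> 0" by (rule DK_nonneg[OF en e0])
    ultimately show "dist (DK (p n) (\<rho> n) p0 \<rho>0) 0 < r" using \<epsilon>(3) r by (simp add: dist_real_def)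
  qed
qed

theorem proposition4:
  fixes p :: "nat \<Rightarrow> nat \<Rightarrow> real" and \<rho> :: "nat \<Rightarrow> nat \<Rightarrow> ('i::countable) mat"
    and p0 :: "nat \<Rightarrow> real" and \<rho>0 :: "nat \<Rightarrow> 'i mat"
  assumes "ensemble p0 \<rho>0" and "\<And>n. ensemble (p n) (\<rho> n)"
  shows "((\<lambda>n. Dstar (p n) (\<rho> n) p0 \<rho>0) \<longlonglongrightarrow> 0 \<longleftrightarrow> (\<lambda>n. DK (p n) (\<rho> n) p0 \<rho>0) \<longlonglongrightarrow> 0)
       \<and> ((\<lambda>n. DK (p n) (\<rho> n) p0 \<rho>0) \<longlonglongrightarrow> 0 \<longleftrightarrow>
          (\<forall>f. bounded_cont_states f \<longrightarrow>
             (\<lambda>n. infsum (\<lambda>i. p n i * f (\<rho> n i)) UNIV) \<longlonglongrightarrow> infsum (\<lambda>i. p0 i * f (\<rho>0 i)) UNIV))"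
proof -
  note e0 = assms(1) and en = assms(2)
  have bc: "(\<lambda>n. DK (p n) (\<rho> n) p0 \<rho>0) \<longlonglongrightarrow> 0 \<Longrightarrow>
      (\<forall>f. bounded_cont_states f \<longrightarrow> (\<lambda>n. W (p n) (\<rho> n) f) \<longlonglongrightarrow> W p0 \<rho>0 f)"
    using b_imp_c[OF e0, of p \<rho>] en by blast
  have cb: "(\<forall>f. bounded_cont_states f \<longrightarrow> (\<lambda>n. W (p n) (\<rho> n) f) \<longlonglongrightarrow> W p0 \<rho>0 f) \<Longrightarrow>
      (\<lambda>n. DK (p n) (\<rho> n) p0 \<rho>0) \<longlonglongrightarrow> 0"
    using c_imp_b[OF e0, of p \<rho>] en by blast
  have ac: "(\<lambda>n. Dstar (p n) (\<rho> n) p0 \<rho>0) \<longlonglongrightarrow> 0 \<Longrightarrow>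
      (\<forall>f. bounded_cont_states f \<longrightarrow> (\<lambda>n. W (p n) (\<rho> n) f) \<longlonglongrightarrow> W p0 \<rho>0 f)"
    using a_imp_c[OF e0, of p \<rho>] en by blast
  have ba: "(\<lambda>n. Dstar (p n) (\<rho> n) p0 \<rho>0) \<longlonglongrightarrow> 0" if "(\<lambda>n. DK (p n) (\<rho> n) p0 \<rho>0) \<longlonglongrightarrow> 0"
  proof (rule Lim_null_comparison[OF _ that])
    show "eventually (\<lambda>n. norm (Dstar (p n) (\<rho> n) p0 \<rho>0) \<le> DK (p n) (\<rho> n) p0 \<rho>0) sequentially"
      using Dstar_nonneg[OF en e0] Dstar_le_DK[OF en e0] by simp
  qed
  show ?thesis using ac cb bc ba unfolding W_def by blast
qed

end
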